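(* Let $k,\ell,m$ be integers with $0<k<\ell<m$ and $\ell-k>1$. Let $$E_{k,\ell,m}=\sum \prod_{j=1}^{m-1}\overline y_j^{\,\overline N_j}\underline y_j^{\,\underline N_j}\prod_{j=k+1}^{\ell-1}\overline w_j^{\,\overline H_j}\underline w_j^{\,\underline H_j}\prod_{j=0}^{m}z_j^{M_j}\prod_{j=k}^{\ell}\overline z_j^{\,\overline M_j}\underline z_j^{\,\underline M_j},$$ the sum being over all staircase polygons with a staircase hole with widths $k,\ell,m$ (equivalently, over all integer solutions of the system below with the stated sign constraints). Then $E_{k,\ell,m}$ is a rational function and $$E_{k,\ell,m}(1/\overline{\mathbf y},1/\underline{\mathbf y},1/\overline{\mathbf w},1/\underline{\mathbf w},1/\mathbf z,1/\overline{\mathbf z},1/\underline{\mathbf z})=-\frac{z_kz_\ell\prod_{j=1}^{m-1}(\overline y_j\underline y_j)\prod_{j=k+1}^{\ell-1}(\overline w_j\underline w_j)}{\prod_{j=1}^{m-1}z_j\prod_{j=k+1}^{\ell}\underline z_j\prod_{j=k}^{\ell-1}\overline z_j}\,E_{k,\ell,m}(\overline{\mathbf y},\underline{\mathbf y},\overline{\mathbf w},\underline{\mathbf w},\mathbf z,\overline{\mathbf z},\underline{\mathbf z}).$$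
   Context: On the square lattice, a staircase polygon is a self-avoiding polygon bounded by two paths of north and east steps with common endpoints (a convex polygon containing the south-west and north-east corners of its minimal bounding rectangle). A staircase polygon with a staircase hole is a polyomino whose outer boundary is a staircase polygon and which has one hole whose boundary is also a staircase polygon, the hole boundary not touching the outer boundary at any point. Place the figure between the lines $x=0$ and $x=m$ ($m$ = total width); the hole lies between $x=k$ and $x=\ell$. The figure is encoded by nonnegative integers: $\overline N_j,\underline N_j$ ($1\le j\le m-1$), the numbers of north steps on the line $x=j$ of the upper and lower outer boundary paths; $\overline H_j,\underline H_j$ ($k+1\le j\le\ell-1$), the numbers of north steps on $x=j$ of the upper and lower boundary paths of the hole; $M_0,M_m$, the heights of the left and right outer edges; $M_k,M_\ell$, the heights of the left and right edges of the hole; for other $j$ with $1\le j\le m-1$, $M_j$ is the length of the segment of $x=j$ shared by the two unit columns adjacent to $x=j$ (for $k<j<\ell$ these are the two columns of the hole, so the segment lies inside the hole); and for $k\le j\le\ell$, $\underline M_j$ (resp. $\overline M_j$) is the length of the portion of $x=j$ shared by the two adjacent columns of the figure lying below (resp. above) the hole. The unknowns $M_j,\overline M_j,\underline M_j$ are strictly positive, the others nonnegative, and figures with widths $k,\ell,m$ correspond bijectively to integer solutions of the system: $M_0-M_1-\underline N_1=0$; $M_j+\overline N_j-M_{j+1}-\underline N_{j+1}=0$ for $1\le j\le k-2$; $M_{k-1}+\overline N_{k-1}-\overline M_k-M_k-\underline M_k-\underline N_k=0$; $\underline M_\ell+M_\ell+\overline M_\ell+\overline N_\ell-M_{\ell+1}-\underline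 N_{\ell+1}=0$; $M_j+\overline N_j-M_{j+1}-\underline N_{j+1}=0$ for $\ell+1\le j\le m-2$; $M_{m-1}+\overline N_{m-1}-M_m=0$; $\underline M_k-\underline M_{k+1}-\underline N_{k+1}=0$; $\underline M_j+\underline H_j-\underline M_{j+1}-\underline N_{j+1}=0$ for $k+1\le j\le\ell-1$; $\overline M_j+\overline N_j-\overline M_{j+1}-\overline H_{j+1}=0$ for $k\le j\le\ell-2$; $\overline M_{\ell-1}+\overline N_{\ell-1}-\overline M_\ell=0$; $M_k-M_{k+1}-\underline H_{k+1}=0$; $M_j+\overline H_j-M_{j+1}-\underline H_{j+1}=0$ for $k+1\le j\le\ell-2$; $M_{\ell-1}+\overline H_{\ell-1}-M_\ell=0$. The variables $\overline y_j,\underline y_j,\overline w_j,\underline w_j,z_j,\overline z_j,\underline z_j$ are indeterminates attached to $\overline N_j,\underline N_j,\overline H_j,\underline H_j,M_j,\overline M_j,\underline M_j$ respectively; $1/\overline{\mathbf y}$ etc. denotes replacing each variable by its reciprocal. *)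

theory Defs
  imports Complex_Main "HOL-Library.Poly_Mapping"
begin

text \<open>Indeterminates: Yo j = overline y_j, Yu j = underline y_j, Wo j = overline w_j,
  Wu j = underline w_j, Z j = z_j, Zo j = overline z_j, Zu j = underline z_j.
  An exponent vector (monomial) is a finitely supported map var to nat; its entry at
  a variable is the value of the attached unknown (N, H, M).\<close>
datatype var = Yo nat | Yu nat | Wo nat | Wu nat | Z nat | Zo nat | Zu nat

definition relvars :: "nat \<Rightarrow> nat \<Rightarrow> nat \<Rightarrow> var set" where
  "relvars k l m =
     Yo ` {1..m-1} \<union> Yu ` {1..m-1} \<union> Wo ` {k+1..l-1} \<union> Wu ` {k+1..l-1}
     \<union> Z ` {0..m} \<union> Zo ` {k..l} \<union> Zu ` {k..l}"

text \<open>Unknowns outside their index range are not variables; their Poly_Mapping.lookup is 0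
  (this is how overline N_0 and underline N_m enter the boundary cases k = 1, l = m-1).\<close>
definition sol :: "nat \<Rightarrow> nat \<Rightarrow> nat \<Rightarrow> (var \<Rightarrow>\<^sub>0 nat) set" where
  "sol k l m = {a. Poly_Mapping.keys a \<subseteq> relvars k l m \<and>
     (let No = (\<lambda>j. Poly_Mapping.lookup a (Yo j)); Nu = (\<lambda>j. Poly_Mapping.lookup a (Yu j));
          Ho = (\<lambda>j. Poly_Mapping.lookup a (Wo j)); Hu = (\<lambda>j. Poly_Mapping.lookup a (Wu j));
          M = (\<lambda>j. Poly_Mapping.lookup a (Z j)); Mo = (\<lambda>j. Poly_Mapping.lookup a (Zo j)); Mu = (\<lambda>j. Poly_Mapping.lookup a (Zu j))
      in (\<forall>j\<in>{0..m}. M j > 0) \<and> (\<forall>j\<in>{k..l}. Mo j > 0 \<and> Mu j > 0)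
       \<and> (\<forall>j. j + 2 \<le> k \<longrightarrow> M j + No j = M (j+1) + Nu (j+1))
       \<and> M (k-1) + No (k-1) = Mo k + M k + Mu k + Nu k
       \<and> Mu l + M l + Mo l + No l = M (l+1) + Nu (l+1)
       \<and> (\<forall>j. l+1 \<le> j \<and> j \<le> m-1 \<longrightarrow> M j + No j = M (j+1) + Nu (j+1))
       \<and> Mu k = Mu (k+1) + Nu (k+1)
       \<and> (\<forall>j. k+1 \<le> j \<and> j \<le> l-1 \<longrightarrow> Mu j + Hu j = Mu (j+1) + Nu (j+1))
       \<and> (\<forall>j. k \<le> j \<and> j + 2 \<le> l \<longrightarrow> Mo j + No j = Mo (j+1) + Ho (j+1))
       \<and> Mo (l-1) + No (l-1) = Mo l
       \<and> M k = M (k+1) + Hu (k+1)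
       \<and> (\<forall>j. k+1 \<le> j \<and> j + 2 \<le> l \<longrightarrow> M j + Ho j = M (j+1) + Hu (j+1))
       \<and> M (l-1) + Ho (l-1) = M l)}"

type_synonym mpoly = "(var \<Rightarrow>\<^sub>0 nat) \<Rightarrow>\<^sub>0 int"

definition mono_eval :: "(var \<Rightarrow> real) \<Rightarrow> (var \<Rightarrow>\<^sub>0 nat) \<Rightarrow> real" where
  "mono_eval x a = (\<Prod>v\<in>Poly_Mapping.keys a. x v ^ Poly_Mapping.lookup a v)"

definition peval :: "mpoly \<Rightarrow> (var \<Rightarrow> real) \<Rightarrow> real" where
  "peval p x = (\<Sum>a\<in>Poly_Mapping.keys p. of_int (Poly_Mapping.lookup p a) * mono_eval x a)"

text \<open>The formal power series E = sum over S of the monomials x^b (coefficients 0/1,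
  since distinct solutions give distinct monomials) equals the rational function P/Q:
  Q is nonzero and Q * E = P as formal power series.\<close>
definition gf_eq_ratfun :: "(var \<Rightarrow>\<^sub>0 nat) set \<Rightarrow> mpoly \<Rightarrow> mpoly \<Rightarrow> bool" where
  "gf_eq_ratfun S P Q \<longleftrightarrow> Q \<noteq> 0 \<and>
     (\<forall>e. Poly_Mapping.lookup P e = (\<Sum>a\<in>Poly_Mapping.keys Q. if (\<exists>b\<in>S. a + b = e) then Poly_Mapping.lookup Q a else 0))"

definition recip :: "(var \<Rightarrow> real) \<Rightarrow> var \<Rightarrow> real" where
  "recip x = (\<lambda>v. inverse (x v))"

definition fac_num :: "nat \<Rightarrow> nat \<Rightarrow> nat \<Rightarrow> (var \<Rightarrow> real) \<Rightarrow> real" where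
  "fac_num k l m x = x (Z k) * x (Z l) * (\<Prod>j=1..m-1. x (Yo j) * x (Yu j))
     * (\<Prod>j=k+1..l-1. x (Wo j) * x (Wu j))"

definition fac_den :: "nat \<Rightarrow> nat \<Rightarrow> nat \<Rightarrow> (var \<Rightarrow> real) \<Rightarrow> real" where
  "fac_den k l m x = (\<Prod>j=1..m-1. x (Z j)) * (\<Prod>j=k+1..l. x (Zu j)) * (\<Prod>j=k..l-1. x (Zo j))"

end

theory Submission
  imports Defs "HOL-Library.FuncSet"
begin


abbreviation lk where "lk \<equiv> Poly_Mapping.lookup"
abbreviation ks where "ks \<equiv> Poly_Mapping.keys"

definition mon :: "(var \<Rightarrow>\<^sub>0 nat) \<Rightarrow> mpoly" where "mon a = Poly_Mapping.single a 1"

definition lepm :: "(var \<Rightarrow>\<^sub>0 nat) \<Rightarrow> (var \<Rightarrow>\<^sub>0 nat) \<Rightarrow> bool" where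
  "lepm a e \<longleftrightarrow> a + (e - a) = e"

lemma lepm_iff: "lepm a e \<longleftrightarrow> (\<forall>v. lk a v \<le> lk e v)"
  unfolding lepm_def poly_mapping_eq_iff
  by (auto simp: fun_eq_iff lookup_add lookup_minus) (metis le_add1)

lemma lepm_add: "lepm a (a + b)"
  by (simp add: lepm_iff lookup_add)

lemma add_minus_pm[simp]: "(a + b) - a = (b::var \<Rightarrow>\<^sub>0 nat)"
  by simp

lemma lepm_ex: "(\<exists>b. a + b = e) \<longleftrightarrow> lepm a e"
  by (metis lepm_add lepm_def)

lemma lepm_eq: "lepm a e \<Longrightarrow> (e = a + q) \<longleftrightarrow> (q = e - a)"
  by (metis add_minus_pm lepm_def)

lemma lookup_mon_mult:
  "lk (mon a * R) e = (if lepm a e then lk R (e - a) else 0)"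
proof -
  have "lk (mon a * R) e = Sum_any (\<lambda>q. lk R q when e = a + q)"
  proof -
    have "lk (mon a * R) e = Sum_any (\<lambda>l. (lk (Poly_Mapping.single a 1) l) * Sum_any (\<lambda>q. lk R q when e = l + q))"
      unfolding mon_def lookup_mult by simp
    also have "\<dots> = Sum_any (\<lambda>l. Sum_any (\<lambda>q. lk R q when e = a + q) when l = a)"
      by (rule Sum_any.cong) (simp add: lookup_single when_def)
    finally show ?thesis by simp
  qed
  also have "\<dots> = (if lepm a e then lk R (e - a) else 0)"
  proof (cases "lepm a e")
    case True
    then have "(\<lambda>q. lk R q when e = a + q) = (\<lambda>q. lk R q when q = e - a)"
      by (simp add: fun_eq_iff when_def lepm_eq)
    then show ?thesis using True by (simp only: Sum_any_when_equal) simp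
  next
    case False
    have eq: "(\<lambda>q. lk R q when e = a + q) = (\<lambda>q. 0)"
      using False by (auto simp: fun_eq_iff when_def lepm_ex[symmetric])
    show ?thesis using False by (simp only: eq) simp
  qed
  finally show ?thesis .
qed

lemma mono_eval_superset:
  assumes "finite V" "ks a \<subseteq> V"
  shows "mono_eval x a = (\<Prod>v\<in>V. x v ^ lk a v)"
  unfolding mono_eval_def
  by (rule prod.mono_neutral_left) (use assms in \<open>auto simp: in_keys_iff\<close>)

lemma mono_eval_add: "mono_eval x (a + b) = mono_eval x a * mono_eval x b"
proof -
  let ?V = "ks a \<union> ks b"
  have "mono_eval x (a + b) = (\<Prod>v\<in>?V. x v ^ lk (a+b) v)"
    by (rule mono_eval_superset) (auto dest: keys_add[THEN subsetD])
  also have "\<dots> = (\<Prod>v\<in>?V. x v ^ lk a v) * (\<Prod>v\<in>?V. x v ^ lk b v)"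
    by (simp add: lookup_add power_add prod.distrib)
  also have "\<dots> = mono_eval x a * mono_eval x b"
    by (subst (1 2) mono_eval_superset[where V = ?V]) auto
  finally show ?thesis .
qed

lemma mono_eval_zero[simp]: "mono_eval x 0 = 1"
  by (simp add: mono_eval_def)

lemma mono_eval_single: "mono_eval x (Poly_Mapping.single v 1) = x v"
  by (simp add: mono_eval_def)

lemma mono_eval_sum: "mono_eval x (\<Sum>i\<in>I. f i) = (\<Prod>i\<in>I. mono_eval x (f i))"
  by (induction I rule: infinite_finite_induct) (auto simp: mono_eval_add)

lemma mono_eval_recip:
  assumes "\<forall>v. x v \<noteq> 0"
  shows "mono_eval (recip x) a = inverse (mono_eval x a)"
  unfolding mono_eval_def recip_def by (simp add: prod_inversef[symmetric] power_inverse o_def)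

lemma peval_superset:
  assumes "finite A" "ks p \<subseteq> A"
  shows "peval p x = (\<Sum>a\<in>A. of_int (lk p a) * mono_eval x a)"
  unfolding peval_def
  by (rule sum.mono_neutral_left) (use assms in \<open>auto simp: in_keys_iff\<close>)

lemma peval_add: "peval (p + q) x = peval p x + peval q x"
proof -
  let ?A = "ks p \<union> ks q"
  have "peval (p + q) x = (\<Sum>a\<in>?A. of_int (lk (p+q) a) * mono_eval x a)"
    by (rule peval_superset) (auto dest: keys_add[THEN subsetD])
  also have "\<dots> = (\<Sum>a\<in>?A. of_int (lk p a) * mono_eval x a) + (\<Sum>a\<in>?A. of_int (lk q a) * mono_eval x a)"
    by (simp add: lookup_add distrib_right sum.distrib)
  also have "\<dots> = peval p x + peval q x"
    by (subst (1 2) peval_superset[where A = ?A]) auto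
  finally show ?thesis .
qed

lemma peval_diff: "peval (p - q) x = peval p x - peval q x"
proof -
  let ?A = "ks p \<union> ks q"
  have "peval (p - q) x = (\<Sum>a\<in>?A. of_int (lk (p-q) a) * mono_eval x a)"
    by (rule peval_superset) (auto dest: keys_diff[THEN subsetD])
  also have "\<dots> = (\<Sum>a\<in>?A. of_int (lk p a) * mono_eval x a) - (\<Sum>a\<in>?A. of_int (lk q a) * mono_eval x a)"
    by (simp add: lookup_minus left_diff_distrib sum_subtractf)
  also have "\<dots> = peval p x - peval q x"
    by (subst (1 2) peval_superset[where A = ?A]) auto
  finally show ?thesis .
qed

lemma peval_zero[simp]: "peval 0 x = 0"
  by (simp add: peval_def)

lemma peval_sum: "peval (\<Sum>i\<in>I. f i) x = (\<Sum>i\<in>I. peval (f i) x)"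
  by (induction I rule: infinite_finite_induct) (auto simp: peval_add)

lemma peval_one[simp]: "peval 1 x = 1"
  by (simp add: peval_def lookup_one)

lemma peval_mon: "peval (mon a) x = mono_eval x a"
  by (simp add: peval_def mon_def)

lemma keys_mon_mult: "ks (mon a * R) \<subseteq> (\<lambda>b. a + b) ` ks R"
proof
  fix e assume "e \<in> ks (mon a * R)"
  then have "lepm a e" "lk R (e - a) \<noteq> 0"
    by (auto simp: in_keys_iff lookup_mon_mult split: if_splits)
  then show "e \<in> (\<lambda>b. a + b) ` ks R"
    by (metis image_eqI in_keys_iff lepm_def)
qed

lemma peval_mon_mult: "peval (mon a * R) x = mono_eval x a * peval R x"
proof -
  have "peval (mon a * R) x = (\<Sum>e\<in>(\<lambda>b. a + b) ` ks R. of_int (lk (mon a * R) e) * mono_eval x e)"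
    by (rule peval_superset) (auto simp: keys_mon_mult)
  also have "\<dots> = (\<Sum>b\<in>ks R. of_int (lk (mon a * R) (a + b)) * mono_eval x (a + b))"
    by (subst sum.reindex) (auto simp: inj_on_def)
  also have "\<dots> = (\<Sum>b\<in>ks R. mono_eval x a * (of_int (lk R b) * mono_eval x b))"
    by (rule sum.cong) (auto simp: lookup_mon_mult lepm_add mono_eval_add)
  also have "\<dots> = mono_eval x a * peval R x"
    by (simp add: peval_def sum_distrib_left)
  finally show ?thesis .
qed

definition sh :: "(var \<Rightarrow>\<^sub>0 nat) \<Rightarrow> ((var \<Rightarrow>\<^sub>0 nat) \<Rightarrow> int) \<Rightarrow> (var \<Rightarrow>\<^sub>0 nat) \<Rightarrow> int" where
  "sh a F e = (if lepm a e then F (e - a) else 0)"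

definition cv :: "mpoly \<Rightarrow> ((var \<Rightarrow>\<^sub>0 nat) \<Rightarrow> int) \<Rightarrow> (var \<Rightarrow>\<^sub>0 nat) \<Rightarrow> int" where
  "cv Q F e = (\<Sum>a\<in>ks Q. lk Q a * sh a F e)"

lemma cv_superset:
  assumes "finite A" "ks Q \<subseteq> A"
  shows "cv Q F e = (\<Sum>a\<in>A. lk Q a * sh a F e)"
  unfolding cv_def
  by (rule sum.mono_neutral_left) (use assms in \<open>auto simp: in_keys_iff\<close>)

lemma cv_add: "cv (p + q) F e = cv p F e + cv q F e"
proof -
  let ?A = "ks p \<union> ks q"
  have "cv (p + q) F e = (\<Sum>a\<in>?A. lk (p+q) a * sh a F e)"
    by (rule cv_superset) (auto dest: keys_add[THEN subsetD])
  also have "\<dots> = (\<Sum>a\<in>?A. lk p a * sh a F e) + (\<Sum>a\<in>?A. lk q a * sh a F e)"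
    by (simp add: lookup_add distrib_right sum.distrib)
  also have "\<dots> = cv p F e + cv q F e"
    by (subst (1 2) cv_superset[where A = ?A]) auto
  finally show ?thesis .
qed

lemma cv_diff: "cv (p - q) F e = cv p F e - cv q F e"
proof -
  let ?A = "ks p \<union> ks q"
  have "cv (p - q) F e = (\<Sum>a\<in>?A. lk (p-q) a * sh a F e)"
    by (rule cv_superset) (auto dest: keys_diff[THEN subsetD])
  also have "\<dots> = (\<Sum>a\<in>?A. lk p a * sh a F e) - (\<Sum>a\<in>?A. lk q a * sh a F e)"
    by (simp add: lookup_minus left_diff_distrib sum_subtractf)
  also have "\<dots> = cv p F e - cv q F e"
    by (subst (1 2) cv_superset[where A = ?A]) auto
  finally show ?thesis .
qed

lemma lepm_zero[simp]: "lepm 0 e"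
  by (simp add: lepm_def)

lemma cv_one[simp]: "cv 1 F = F"
  by (simp add: fun_eq_iff cv_def lookup_one sh_def)

lemma cv_lin_diff: "cv Q (\<lambda>e. F e - G e) e = cv Q F e - cv Q G e"
  unfolding cv_def sh_def sum_subtractf[symmetric]
  by (rule sum.cong) (auto simp: right_diff_distrib)

lemma sh_sum: "sh a (\<lambda>e. \<Sum>i\<in>I. F i e) e = (\<Sum>i\<in>I. sh a (F i) e)"
  by (simp add: sh_def)

lemma cv_lin_sum: "cv Q (\<lambda>e. \<Sum>i\<in>I. F i e) e = (\<Sum>i\<in>I. cv Q (F i) e)"
  unfolding cv_def sh_sum sum_distrib_left
  by (rule sum.swap)

lemma lepm_add_iff: "lepm (a + b) e \<longleftrightarrow> lepm b e \<and> lepm a (e - b)"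
  unfolding lepm_iff lookup_add lookup_minus
  by (metis add_leD2 le_diff_conv2)

lemma minus_add_pm: "lepm (a + b) e \<Longrightarrow> e - (a + b) = e - b - a"
  by (rule poly_mapping_eqI) (auto simp: lookup_add lookup_minus)

lemma sh_sh: "sh b (sh a F) = sh (a + b) F"
  by (auto simp: fun_eq_iff sh_def lepm_add_iff minus_add_pm)

lemma cv_mon_mult: "cv (mon a * R) F = cv R (sh a F)"
proof
  fix e
  have "cv (mon a * R) F e = (\<Sum>c\<in>(\<lambda>b. a + b) ` ks R. lk (mon a * R) c * sh c F e)"
    by (rule cv_superset) (auto simp: keys_mon_mult)
  also have "\<dots> = (\<Sum>b\<in>ks R. lk (mon a * R) (a + b) * sh (a + b) F e)"
    by (subst sum.reindex) (auto simp: inj_on_def)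
  also have "\<dots> = (\<Sum>b\<in>ks R. lk R b * sh b (sh a F) e)"
    by (rule sum.cong) (auto simp: lookup_mon_mult lepm_add sh_sh)
  also have "\<dots> = cv R (sh a F) e"
    by (simp add: cv_def)
  finally show "cv (mon a * R) F e = cv R (sh a F) e" .
qed

lemma cv_mon: "cv (mon a) F = sh a F"
  using cv_mon_mult[of a 1 F] by simp

definition good :: "mpoly \<Rightarrow> bool" where
  "good A \<longleftrightarrow> (\<forall>x R. peval (A * R) x = peval A x * peval R x) \<and> (\<forall>R F. cv (A * R) F = cv R (cv A F))"

lemma good_one: "good 1"
  by (simp add: good_def)

lemma good_mon: "good (mon a)"
  by (simp add: good_def peval_mon_mult peval_mon cv_mon_mult cv_mon)

lemma good_mult:
  assumes "good A" "good B" shows "good (A * B)"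
proof -
  have p: "peval (A * B * R) x = peval A x * peval B x * peval R x" for x R
    using assms by (simp add: good_def mult.assoc)
  have c: "cv (A * B * R) F = cv R (cv B (cv A F))" for R F
    using assms by (simp add: good_def mult.assoc)
  show ?thesis unfolding good_def
    using p[where R=1] c[where R=1] by (simp add: p c)
qed

lemma good_one_minus_mon: "good (1 - mon w)"
proof -
  have p: "peval ((1 - mon w) * R) x = (1 - mono_eval x w) * peval R x" for R x
    by (simp add: left_diff_distrib peval_diff peval_mon_mult)
  have c: "cv ((1 - mon w) * R) F = cv R (\<lambda>e. F e - sh w F e)" for R F
    by (simp add: fun_eq_iff left_diff_distrib cv_diff cv_mon_mult cv_lin_diff)
  show ?thesis unfolding good_def
    using p[of 1] c[of 1] by (simp add: p c)
qed

lemma good_prod: "(\<And>i. i \<in> I \<Longrightarrow> good (f i)) \<Longrightarrow> good (\<Prod>i\<in>I. f i)"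
  by (induction I rule: infinite_finite_induct) (auto simp: good_one good_mult)

lemma good_peval: "good A \<Longrightarrow> peval (A * R) x = peval A x * peval R x"
  by (simp add: good_def)

lemma good_cv: "good A \<Longrightarrow> cv (A * R) F = cv R (cv A F)"
  by (simp add: good_def)

lemma peval_prod_good: "(\<And>i. i \<in> I \<Longrightarrow> good (f i)) \<Longrightarrow> peval (\<Prod>i\<in>I. f i) x = (\<Prod>i\<in>I. peval (f i) x)"
proof (induction I rule: infinite_finite_induct)
  case (insert i I)
  then show ?case by (simp add: good_peval)
qed auto

lemma peval_one_minus_mon: "peval (1 - mon w) x = 1 - mono_eval x w"
  by (simp add: peval_diff peval_mon)




definition ind :: "(var \<Rightarrow>\<^sub>0 nat) set \<Rightarrow> (var \<Rightarrow>\<^sub>0 nat) \<Rightarrow> int" where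
  "ind S e = (if e \<in> S then 1 else 0)"

definition Gs :: "nat \<Rightarrow> (nat \<Rightarrow> nat) set" where
  "Gs d = {g. \<forall>s\<ge>d. g s = 0}"

lemma Gs_mono: "Gs d \<subseteq> Gs (Suc d)"
  by (auto simp: Gs_def)

lemma Gs_0: "Gs 0 = {\<lambda>_. 0}"
  by (auto simp: Gs_def)

lemma cv_one_minus_mon: "cv (1 - mon w) F = (\<lambda>e. F e - sh w F e)"
  by (simp add: fun_eq_iff cv_diff cv_mon)

lemma cone_step:
  assumes inj: "inj_on F (Gs (Suc d))"
    and step: "\<And>g. g \<in> Gs (Suc d) \<Longrightarrow> F (g(d := Suc (g d))) = w + F g"
  shows "cv (1 - mon w) (ind (F ` Gs (Suc d))) = ind (F ` Gs d)"
proof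
  fix e
  have upd: "g(d := Suc (g d)) \<in> Gs (Suc d)" if "g \<in> Gs (Suc d)" for g
    using that by (auto simp: Gs_def)
  let ?S = "F ` Gs (Suc d)" and ?T = "F ` Gs d"
  have shS: "sh w (ind ?S) e = (if lepm w e \<and> e - w \<in> ?S then 1 else 0)"
    by (simp add: sh_def ind_def)
  show "cv (1 - mon w) (ind ?S) e = ind ?T e"
  proof (cases "e \<in> ?T")
    case True
    then obtain g0 where g0: "g0 \<in> Gs d" "e = F g0" by auto
    have "\<not> (lepm w e \<and> e - w \<in> ?S)"
    proof
      assume a: "lepm w e \<and> e - w \<in> ?S"
      then obtain g1 where g1: "g1 \<in> Gs (Suc d)" "e - w = F g1" by blast
      have "F (g1(d := Suc (g1 d))) = e" using step[OF g1(1)] g1 a by (simp add: lepm_def)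
      moreover have "g0 \<in> Gs (Suc d)" using g0(1) Gs_mono by blast
      moreover have "F g0 = F (g1(d := Suc (g1 d)))" using calculation(1) g0(2) by simp
      ultimately have "g0 = g1(d := Suc (g1 d))"
        using inj_onD[OF inj] upd[OF g1(1)] by blast
      then have "g0 d = Suc (g1 d)" by simp
      then show False using g0(1) by (simp add: Gs_def)
    qed
    moreover have "e \<in> ?S" using g0 Gs_mono by auto
    ultimately show ?thesis using True
      by (simp add: cv_one_minus_mon shS ind_def)
  next
    case False
    show ?thesis
    proof (cases "e \<in> ?S")
      case True
      then obtain g where g: "g \<in> Gs (Suc d)" "e = F g" by auto
      have "g d \<noteq> 0"
      proof
        assume "g d = 0"
        have "g s = 0" if "d \<le> s" for s
          using g(1) \<open>g d = 0\<close> that by (cases "s = d") (auto simp: Gs_def)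
        then have "g \<in> Gs d" by (simp add: Gs_def)
        then show False using g False by blast
      qed
      define g' where "g' = g(d := g d - 1)"
      have g': "g' \<in> Gs (Suc d)" using g by (auto simp: Gs_def g'_def)
      have "g'(d := Suc (g' d)) = g" using \<open>g d \<noteq> 0\<close> by (auto simp: g'_def fun_eq_iff)
      then have "e = w + F g'" using step[OF g'] g by simp
      then have "lepm w e \<and> e - w \<in> ?S" using g' by (auto simp: lepm_add)
      then show ?thesis using True False by (simp add: cv_one_minus_mon shS ind_def)
    next
      case notS: False
      have "\<not> (lepm w e \<and> e - w \<in> ?S)"
      proof
        assume a: "lepm w e \<and> e - w \<in> ?S"
        then obtain g1 where g1: "g1 \<in> Gs (Suc d)" "e - w = F g1" by blast
        have "F (g1(d := Suc (g1 d))) = e" using step[OF g1(1)] g1 a by (simp add: lepm_def)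
        then show False using notS upd[OF g1(1)] by blast
      qed
      then show ?thesis using notS False by (simp add: cv_one_minus_mon shS ind_def)
    qed
  qed
qed

lemma cone_gf:
  assumes "inj_on F (Gs d)"
    and "\<And>g s. g \<in> Gs d \<Longrightarrow> s < d \<Longrightarrow> F (g(s := Suc (g s))) = W s + F g"
  shows "cv (\<Prod>s<d. 1 - mon (W s)) (ind (F ` Gs d)) = ind {F (\<lambda>_. 0)}"
  using assms
proof (induction d)
  case 0
  then show ?case by (simp add: Gs_0)
next
  case (Suc d)
  have "cv (\<Prod>s<Suc d. 1 - mon (W s)) (ind (F ` Gs (Suc d)))
      = cv ((1 - mon (W d)) * (\<Prod>s<d. 1 - mon (W s))) (ind (F ` Gs (Suc d)))"
    by (simp add: mult.commute)
  also have "\<dots> = cv (\<Prod>s<d. 1 - mon (W s)) (cv (1 - mon (W d)) (ind (F ` Gs (Suc d))))"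
    by (rule good_cv[OF good_one_minus_mon])
  also have "cv (1 - mon (W d)) (ind (F ` Gs (Suc d))) = ind (F ` Gs d)"
    by (rule cone_step[OF Suc.prems(1)]) (rule Suc.prems(2), auto)
  also have "cv (\<Prod>s<d. 1 - mon (W s)) (ind (F ` Gs d)) = ind {F (\<lambda>_. 0)}"
  proof -
    have inj': "inj_on F (Gs d)" using Suc.prems(1) Gs_mono by (rule inj_on_subset)
    have step': "F (g(s := Suc (g s))) = W s + F g" if "g \<in> Gs d" "s < d" for g s
      using Suc.prems(2) Gs_mono that by (meson less_SucI subsetD)
    show ?thesis by (rule Suc.IH[OF inj' step'])
  qed
  finally show ?case .
qed

lemma pm_diff_self: "(e::var\<Rightarrow>\<^sub>0nat) - e = 0"
  by (rule poly_mapping_eqI) (simp add: lookup_minus)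

lemma lepm_refl: "lepm a a"
  unfolding lepm_def pm_diff_self by simp

lemma sh_ind0_same: "sh e (ind {0}) e = 1"
  unfolding sh_def ind_def using lepm_refl[of e] by (simp only: if_True pm_diff_self singleton_iff simp_thms)

lemma lepm_diff0: "lepm b e \<Longrightarrow> e - b = 0 \<Longrightarrow> b = e"
  unfolding lepm_def by (metis add.right_neutral)

lemma sh_ind0: "sh b (ind {0}) e = (if b = e then 1 else 0)"
proof (cases "b = e")
  case True then show ?thesis using sh_ind0_same by simp
next
  case False
  have "\<not> (lepm b e \<and> e - b = 0)" using False lepm_diff0 by blast
  then show ?thesis using False unfolding sh_def ind_def by simp
qed

lemma ind_single_sh: "ind {a} = sh a (ind {0})"
  unfolding fun_eq_iff sh_ind0 by (simp add: ind_def eq_commute)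

lemma cv_ind_zero: "cv ZZ (ind {0}) = lk ZZ"
proof
  fix e
  have "cv ZZ (ind {0}) e = (\<Sum>b\<in>ks ZZ. if b = e then lk ZZ b else 0)"
    unfolding cv_def sh_ind0 by (intro sum.cong refl) simp
  also have "\<dots> = lk ZZ e" by (simp add: in_keys_iff)
  finally show "cv ZZ (ind {0}) e = lk ZZ e" .
qed

lemma cv_ind_single: "cv R (ind {a}) = lk (mon a * R)"
  unfolding ind_single_sh[of a] cv_mon_mult[symmetric] cv_ind_zero ..

lemma cones_gf:
  assumes fin: "finite L"
    and inj: "\<And>p. p \<in> L \<Longrightarrow> inj_on (F p) (Gs d)"
    and step: "\<And>p g s. p \<in> L \<Longrightarrow> g \<in> Gs d \<Longrightarrow> s < d \<Longrightarrow> F p (g(s := Suc (g s))) = W p s + F p g"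
    and disj: "\<And>p p' g g'. p \<in> L \<Longrightarrow> p' \<in> L \<Longrightarrow> g \<in> Gs d \<Longrightarrow> g' \<in> Gs d \<Longrightarrow> F p g = F p' g' \<Longrightarrow> p = p'"
  shows "cv (\<Prod>p\<in>L. \<Prod>s<d. 1 - mon (W p s)) (ind (\<Union>p\<in>L. F p ` Gs d))
       = lk (\<Sum>p\<in>L. mon (F p (\<lambda>_. 0)) * (\<Prod>q\<in>L-{p}. \<Prod>s<d. 1 - mon (W q s)))"
proof -
  let ?Q = "\<lambda>p. \<Prod>s<d. 1 - mon (W p s)"
  have indU: "ind (\<Union>p\<in>L. F p ` Gs d) = (\<lambda>e. \<Sum>p\<in>L. ind (F p ` Gs d) e)"
  proof
    fix e
    show "ind (\<Union>p\<in>L. F p ` Gs d) e = (\<Sum>p\<in>L. ind (F p ` Gs d) e)"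
    proof (cases "e \<in> (\<Union>p\<in>L. F p ` Gs d)")
      case True
      then obtain p0 g0 where p0: "p0 \<in> L" "g0 \<in> Gs d" "e = F p0 g0" by auto
      have "\<forall>p\<in>L. ind (F p ` Gs d) e = (if p = p0 then 1 else 0)"
        using p0 disj by (auto simp: ind_def)
      then have "(\<Sum>p\<in>L. ind (F p ` Gs d) e) = (\<Sum>p\<in>L. if p = p0 then 1 else 0)"
        by (intro sum.cong) auto
      then show ?thesis using True fin p0 by (simp add: ind_def)
    next
      case False
      then show ?thesis by (auto simp: ind_def intro!: sum.neutral)
    qed
  qed
  have each: "cv (\<Prod>p\<in>L. ?Q p) (ind (F p ` Gs d)) = lk (mon (F p (\<lambda>_. 0)) * (\<Prod>q\<in>L-{p}. ?Q q))"
    if p: "p \<in> L" for p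
  proof -
    have "(\<Prod>p\<in>L. ?Q p) = ?Q p * (\<Prod>q\<in>L-{p}. ?Q q)"
      using fin p by (simp add: prod.remove)
    then have "cv (\<Prod>p\<in>L. ?Q p) (ind (F p ` Gs d)) = cv (\<Prod>q\<in>L-{p}. ?Q q) (cv (?Q p) (ind (F p ` Gs d)))"
      by (simp add: good_cv good_prod good_one_minus_mon)
    also have "cv (?Q p) (ind (F p ` Gs d)) = ind {F p (\<lambda>_. 0)}"
      by (rule cone_gf) (use inj step p in auto)
    finally show ?thesis by (simp add: cv_ind_single)
  qed
  show ?thesis
    unfolding indU
    by (simp add: fun_eq_iff cv_lin_sum each lookup_sum)
qed




locale linext =
  fixes n :: nat and lo hi :: "var \<Rightarrow> nat" and Vs :: "var set"
  assumes finVs: "finite Vs"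
    and lo_lt: "v \<in> Vs \<Longrightarrow> lo v < n" and hi_lt: "v \<in> Vs \<Longrightarrow> hi v < n"
    and lo_ne: "v \<in> Vs \<Longrightarrow> lo v \<noteq> hi v"
    and rigid: "\<And>h h'. (\<forall>v\<in>Vs. h (hi v) - h (lo v) = h' (hi v) - h' (lo v)) \<Longrightarrow> \<exists>c. \<forall>i<n. h i = h' i + (c::int)"
begin

definition tb :: "bool \<Rightarrow> nat \<Rightarrow> nat" where "tb b i = (if b then n - 1 - i else i)"
definition key :: "bool \<Rightarrow> (nat \<Rightarrow> int) \<Rightarrow> nat \<Rightarrow> int" where "key b h i = h i * int n + int (tb b i)"
definition pos :: "bool \<Rightarrow> (nat \<Rightarrow> int) \<Rightarrow> nat \<Rightarrow> nat" where
  "pos b h i = card {j\<in>{..<n}. key b h j < key b h i}"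
definition posr :: "bool \<Rightarrow> (nat \<Rightarrow> int) \<Rightarrow> nat \<Rightarrow> nat" where "posr b h = restrict (pos b h) {..<n}"
definition perms :: "(nat \<Rightarrow> nat) set" where "perms = {p \<in> {..<n} \<rightarrow>\<^sub>E {..<n}. inj_on p {..<n}}"
definition LL :: "(nat \<Rightarrow> nat) set" where "LL = {p \<in> perms. \<forall>v\<in>Vs. p (lo v) < p (hi v)}"
definition invp :: "(nat \<Rightarrow> nat) \<Rightarrow> nat \<Rightarrow> nat" where "invp p s = (THE i. i < n \<and> p i = s)"
definition eps :: "bool \<Rightarrow> (nat \<Rightarrow> nat) \<Rightarrow> nat \<Rightarrow> int" where
  "eps b p s = (if tb b (invp p s) > tb b (invp p (Suc s)) then 1 else 0)"
definition hcone :: "bool \<Rightarrow> (nat \<Rightarrow> nat) \<Rightarrow> (nat \<Rightarrow> nat) \<Rightarrow> nat \<Rightarrow> int" where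
  "hcone b p g i = (\<Sum>s<p i. int (g s) + eps b p s)"
definition up :: "(nat \<Rightarrow> nat) \<Rightarrow> nat \<Rightarrow> nat \<Rightarrow> int" where "up p s i = (if s < p i then 1 else 0)"
definition lin :: "(nat \<Rightarrow> int) \<Rightarrow> var \<Rightarrow> int" where "lin h v = h (hi v) - h (lo v)"
definition thr :: "bool \<Rightarrow> var \<Rightarrow> int" where "thr b v = (if tb b (lo v) > tb b (hi v) then 1 else 0)"
definition Hs :: "bool \<Rightarrow> (nat \<Rightarrow> int) set" where "Hs b = {h. \<forall>v\<in>Vs. lin h v \<ge> thr b v}"
definition ee :: "(nat \<Rightarrow> int) \<Rightarrow> (var \<Rightarrow>\<^sub>0 nat)" where
  "ee h = Abs_poly_mapping (\<lambda>v. if v \<in> Vs then nat (lin h v) else 0)"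

lemma tb_lt: "i < n \<Longrightarrow> tb b i < n"
  by (auto simp: tb_def)

lemma tb_inj: "i < n \<Longrightarrow> j < n \<Longrightarrow> tb b i = tb b j \<Longrightarrow> i = j"
  by (auto simp: tb_def split: if_splits)

lemma key_less:
  assumes "i < n" "j < n"
  shows "key b h i < key b h j \<longleftrightarrow> h i < h j \<or> (h i = h j \<and> tb b i < tb b j)"
proof -
  have ti: "int (tb b i) < int n" "int (tb b j) < int n" using assms tb_lt by auto
  consider "h i < h j" | "h i = h j" | "h j < h i" by linarith
  then show ?thesis
  proof cases
    case 1
    then have "(h i + 1) * int n \<le> h j * int n" by (intro mult_right_mono) auto
    then show ?thesis using 1 ti by (simp add: key_def algebra_simps)
  next
    case 2 then show ?thesis by (simp add: key_def)
  next
    case 3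
    then have "(h j + 1) * int n \<le> h i * int n" by (intro mult_right_mono) auto
    then show ?thesis using 3 ti by (simp add: key_def algebra_simps)
  qed
qed

lemma key_eq:
  assumes "i < n" "j < n" "key b h i = key b h j" shows "i = j"
proof -
  have "\<not> key b h i < key b h j" "\<not> key b h j < key b h i" using assms(3) by auto
  then have "h i = h j" "tb b i = tb b j"
    using key_less[OF assms(1,2), of b h] key_less[OF assms(2,1), of b h] by auto
  then show ?thesis using tb_inj assms by blast
qed

lemma pos_lt: "i < n \<Longrightarrow> pos b h i < n"
proof -
  assume i: "i < n"
  have "{j\<in>{..<n}. key b h j < key b h i} \<subseteq> {..<n} - {i}" by auto
  then have "pos b h i \<le> card ({..<n} - {i})" unfolding pos_def by (intro card_mono) auto
  then show ?thesis using i by simp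
qed

lemma pos_mono: "i < n \<Longrightarrow> j < n \<Longrightarrow> key b h i < key b h j \<Longrightarrow> pos b h i < pos b h j"
  unfolding pos_def
  by (rule psubset_card_mono) auto

lemma pos_less_iff: "i < n \<Longrightarrow> j < n \<Longrightarrow> pos b h i < pos b h j \<longleftrightarrow> key b h i < key b h j"
  using pos_mono[of i j b h] pos_mono[of j i b h] key_eq[of i j b h]
  by (metis less_asym' linorder_neqE)

lemma posr_perms: "posr b h \<in> perms"
proof -
  have "inj_on (pos b h) {..<n}"
    by (rule inj_onI) (metis lessThan_iff less_irrefl pos_less_iff linorder_neqE key_eq)
  then show ?thesis
    by (auto simp: perms_def posr_def pos_lt inj_on_def)
qed

lemma posr_less_iff: "i < n \<Longrightarrow> j < n \<Longrightarrow> posr b h i < posr b h j \<longleftrightarrow> key b h i < key b h j"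
  by (simp add: posr_def pos_less_iff)

lemma thr_iff:
  assumes "v \<in> Vs"
  shows "lin h v \<ge> thr b v \<longleftrightarrow> key b h (lo v) < key b h (hi v)"
proof -
  have "tb b (lo v) \<noteq> tb b (hi v)" using tb_inj assms lo_ne lo_lt hi_lt by metis
  then show ?thesis using key_less[OF lo_lt[OF assms] hi_lt[OF assms], of b h]
    by (auto simp: lin_def thr_def)
qed

lemma Hs_iff: "h \<in> Hs b \<longleftrightarrow> posr b h \<in> LL"
  using posr_perms[of b h]
  by (auto simp: Hs_def LL_def thr_iff posr_less_iff lo_lt hi_lt)

lemma perms_bij: "p \<in> perms \<Longrightarrow> bij_betw p {..<n} {..<n}"
proof -
  assume p: "p \<in> perms"
  then have inj: "inj_on p {..<n}" and sub: "p ` {..<n} \<subseteq> {..<n}"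
    by (auto simp: perms_def PiE_def Pi_def)
  have "p ` {..<n} = {..<n}" by (rule endo_inj_surj[OF _ sub inj]) simp
  then show ?thesis using inj by (simp add: bij_betw_def)
qed

lemma invp:
  assumes p: "p \<in> perms" and s: "s < n"
  shows "invp p s < n" "p (invp p s) = s"
proof -
  have "\<exists>!i. i < n \<and> p i = s"
  proof -
    have "s \<in> p ` {..<n}" using perms_bij[OF p] s unfolding bij_betw_def by simp
    then obtain i where "i < n" "p i = s" by auto
    moreover have "i' = i" if "i' < n" "p i' = s" for i'
      using perms_bij[OF p] that \<open>i < n\<close> \<open>p i = s\<close> unfolding bij_betw_def inj_on_def by auto
    ultimately show ?thesis by blast
  qed
  then have "invp p s < n \<and> p (invp p s) = s" unfolding invp_def by (rule theI')
  then show "invp p s < n" "p (invp p s) = s" by auto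
qed

lemma invp_p: "p \<in> perms \<Longrightarrow> i < n \<Longrightarrow> invp p (p i) = i"
  unfolding invp_def
  by (rule the_equality) (auto simp: perms_def inj_on_def)

lemma perms_lt: "p \<in> perms \<Longrightarrow> i < n \<Longrightarrow> p i < n"
  by (auto simp: perms_def)

lemma perms_inj: "p \<in> perms \<Longrightarrow> i < n \<Longrightarrow> j < n \<Longrightarrow> p i = p j \<Longrightarrow> i = j"
  by (auto simp: perms_def inj_on_def)


lemma adj_key:
  assumes "Suc s < n"
  shows "key b h (invp (posr b h) s) < key b h (invp (posr b h) (Suc s))"
proof -
  let ?p = "posr b h"
  have p: "?p \<in> perms" by (rule posr_perms)
  have lt: "invp ?p s < n" "invp ?p (Suc s) < n" using invp[OF p] assms by auto
  have "?p (invp ?p s) < ?p (invp ?p (Suc s))" using invp(2)[OF p] assms by simp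
  then show ?thesis using posr_less_iff[OF lt] by blast
qed

lemma adj_diff:
  assumes "Suc s < n"
  shows "h (invp (posr b h) (Suc s)) - h (invp (posr b h) s) \<ge> eps b (posr b h) s"
proof -
  let ?p = "posr b h"
  have p: "?p \<in> perms" by (rule posr_perms)
  have lt: "invp ?p s < n" "invp ?p (Suc s) < n" using invp[OF p] assms by auto
  show ?thesis using adj_key[OF assms, of b h] key_less[OF lt, of b h]
    by (auto simp: eps_def)
qed

lemma decomp:
  fixes b :: bool and h :: "nat \<Rightarrow> int"
  defines "p \<equiv> posr b h"
  defines "g \<equiv> (\<lambda>s. if Suc s < n then nat (h (invp p (Suc s)) - h (invp p s) - eps b p s) else 0)"
  shows "g \<in> Gs (n - 1)" "\<forall>i<n. h i = h (invp p 0) + hcone b p g i"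
proof -
  show "g \<in> Gs (n - 1)" by (auto simp: Gs_def g_def)
  have pp: "p \<in> perms" unfolding p_def by (rule posr_perms)
  have main: "t < n \<Longrightarrow> h (invp p t) = h (invp p 0) + (\<Sum>s<t. int (g s) + eps b p s)" for t
  proof (induction t)
    case 0 then show ?case by simp
  next
    case (Suc t)
    have "int (g t) = h (invp p (Suc t)) - h (invp p t) - eps b p t"
      using adj_diff[OF Suc.prems, of b h] Suc.prems by (simp add: g_def p_def)
    then show ?case using Suc by simp
  qed
  show "\<forall>i<n. h i = h (invp p 0) + hcone b p g i"
  proof (intro allI impI)
    fix i assume i: "i < n"
    have "p i < n" using pp i by (rule perms_lt)
    then show "h i = h (invp p 0) + hcone b p g i"
      using main[of "p i"] invp_p[OF pp i] by (simp add: hcone_def)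
  qed
qed

lemma hcone_at:
  assumes "p \<in> perms" "c < n"
  shows "hcone b p g (invp p c) = (\<Sum>s<c. int (g s) + eps b p s)"
  using invp[OF assms] by (simp add: hcone_def)

lemma hcone_diff:
  assumes "p \<in> perms" "a \<le> c" "c < n"
  shows "hcone b p g (invp p c) - hcone b p g (invp p a) = (\<Sum>s\<in>{a..<c}. int (g s) + eps b p s)"
proof -
  have "(\<Sum>s<c. int (g s) + eps b p s) = (\<Sum>s<a. int (g s) + eps b p s) + (\<Sum>s\<in>{a..<c}. int (g s) + eps b p s)"
    using assms(2) by (simp add: lessThan_atLeast0 sum.atLeastLessThan_concat)
  then show ?thesis using hcone_at[OF assms(1,3)] hcone_at[OF assms(1)] assms by simp
qed

lemma eps_nonneg: "eps b p s \<ge> 0"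
  by (simp add: eps_def)

lemma tb_step:
  assumes p: "p \<in> perms" and "Suc c < n" and "eps b p c = 0"
  shows "tb b (invp p c) < tb b (invp p (Suc c))"
proof -
  have lt: "invp p c < n" "invp p (Suc c) < n" using invp[OF p] assms(2) by auto
  have "invp p c \<noteq> invp p (Suc c)" using invp(2)[OF p] assms(2) by (metis Suc_lessD n_not_Suc_n)
  then have "tb b (invp p c) \<noteq> tb b (invp p (Suc c))" using tb_inj lt by blast
  then show ?thesis using assms(3) by (auto simp: eps_def split: if_splits)
qed

lemma tb_chain:
  assumes p: "p \<in> perms"
  shows "a < c \<Longrightarrow> c < n \<Longrightarrow> (\<forall>s\<in>{a..<c}. eps b p s = 0) \<Longrightarrow> tb b (invp p a) < tb b (invp p c)"
proof (induction c)
  case 0 then show ?case by simp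
next
  case (Suc c)
  have st: "tb b (invp p c) < tb b (invp p (Suc c))"
    using tb_step[OF p Suc.prems(2)] Suc.prems by auto
  show ?case
  proof (cases "a = c")
    case True then show ?thesis using st by simp
  next
    case False
    then have "tb b (invp p a) < tb b (invp p c)" using Suc by auto
    then show ?thesis using st by simp
  qed
qed

lemma hcone_key:
  assumes p: "p \<in> perms" and ij: "i < n" "j < n" "p i < p j"
  shows "key b (hcone b p g) i < key b (hcone b p g) j"
proof -
  have pj: "p j < n" using p ij by (simp add: perms_lt)
  have qi: "invp p (p i) = i" and qj: "invp p (p j) = j" using invp_p p ij by auto
  have d: "hcone b p g j - hcone b p g i = (\<Sum>s\<in>{p i..<p j}. int (g s) + eps b p s)"
    using hcone_diff[OF p _ pj, of "p i" b g] ij qi qj by simp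
  have nn: "\<forall>s\<in>{p i..<p j}. int (g s) + eps b p s \<ge> 0" using eps_nonneg by (simp add: add_nonneg_nonneg)
  show ?thesis
  proof (cases "(\<Sum>s\<in>{p i..<p j}. int (g s) + eps b p s) = 0")
    case True
    then have "\<forall>s\<in>{p i..<p j}. int (g s) + eps b p s = 0"
      using nn by (subst (asm) sum_nonneg_eq_0_iff) auto
    then have "\<forall>s\<in>{p i..<p j}. eps b p s = 0" using eps_nonneg
      by (metis add_nonneg_eq_0_iff of_nat_0_le_iff)
    then have "tb b i < tb b j" using tb_chain[OF p ij(3) pj] qi qj by simp
    moreover have "hcone b p g i = hcone b p g j" using d True by simp
    ultimately show ?thesis using key_less[OF ij(1,2)] by simp
  next
    case False
    then have "hcone b p g i < hcone b p g j" using d nn sum_nonneg[of "{p i..<p j}"] by fastforce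
    then show ?thesis using key_less[OF ij(1,2)] by simp
  qed
qed

lemma key_shift: "key b (\<lambda>i. h i + c) i = key b h i + c * int n"
  by (simp add: key_def algebra_simps)

lemma posr_shift: "posr b (\<lambda>i. h i + c) = posr b h"
proof -
  have "pos b (\<lambda>i. h i + c) = pos b h"
    by (simp add: fun_eq_iff pos_def key_shift)
  then show ?thesis by (simp add: posr_def)
qed

lemma posr_cong: "(\<And>i. i < n \<Longrightarrow> h i = h' i) \<Longrightarrow> posr b h = posr b h'"
  unfolding posr_def pos_def key_def by (intro restrict_ext) (auto intro!: arg_cong[where f=card])

lemma posr_hcone:
  assumes p: "p \<in> perms"
  shows "posr b (hcone b p g) = p"
proof
  fix i
  show "posr b (hcone b p g) i = p i"
  proof (cases "i < n")
    case False
    then show ?thesis using p by (auto simp: posr_def perms_def PiE_def extensional_def)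
  next
    case i: True
    have iff: "key b (hcone b p g) j < key b (hcone b p g) i \<longleftrightarrow> p j < p i" if j: "j < n" for j
    proof
      assume "p j < p i" then show "key b (hcone b p g) j < key b (hcone b p g) i"
        using hcone_key[OF p j i] by simp
    next
      assume k: "key b (hcone b p g) j < key b (hcone b p g) i"
      show "p j < p i"
      proof (rule ccontr)
        assume "\<not> p j < p i"
        then consider "p j = p i" | "p i < p j" by linarith
        then show False
        proof cases
          case 1 then have "j = i" using perms_inj[OF p j i] by simp
          then show False using k by simp
        next
          case 2 then show False using hcone_key[OF p i j 2, of b g] k by simp
        qed
      qed
    qed
    have "pos b (hcone b p g) i = card {j\<in>{..<n}. p j < p i}"
      unfolding pos_def using iff by (intro arg_cong[where f=card]) auto
    also have "\<dots> = card (p ` {j\<in>{..<n}. p j < p i})"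
      using p by (intro card_image[symmetric]) (auto simp: perms_def intro: inj_on_subset)
    also have "p ` {j\<in>{..<n}. p j < p i} = {..<p i}"
    proof -
      have "p ` {..<n} = {..<n}" using perms_bij[OF p] by (simp add: bij_betw_def)
      moreover have "p i < n" using p i by (rule perms_lt)
      ultimately show ?thesis by auto
    qed
    finally show ?thesis using i by (simp add: posr_def)
  qed
qed

lemma hcone_step: "hcone b p (g(s := Suc (g s))) i = hcone b p g i + up p s i"
proof -
  have "hcone b p (g(s := Suc (g s))) i = (\<Sum>r<p i. (int (g r) + eps b p r) + (if r = s then 1 else 0))"
    unfolding hcone_def by (rule sum.cong) auto
  also have "\<dots> = hcone b p g i + up p s i"
    by (simp add: sum.distrib hcone_def up_def)
  finally show ?thesis .
qed

lemma hcone_TF: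
  assumes p: "p \<in> perms" and i: "i < n"
  shows "hcone True p (\<lambda>_. 0) i + hcone False p (\<lambda>_. 0) i = (\<Sum>s<n-1. up p s i)"
proof -
  have pi: "p i < n" using p i by (rule perms_lt)
  have "hcone True p (\<lambda>_. 0) i + hcone False p (\<lambda>_. 0) i = (\<Sum>s<p i. eps True p s + eps False p s)"
    by (simp add: hcone_def sum.distrib)
  also have "\<dots> = (\<Sum>s<p i. 1)"
  proof (rule sum.cong)
    fix s assume "s \<in> {..<p i}"
    then have s: "Suc s < n" using pi by simp
    have lt: "invp p s < n" "invp p (Suc s) < n" using invp[OF p] s by auto
    have "invp p s \<noteq> invp p (Suc s)" using invp(2)[OF p] s by (metis Suc_lessD n_not_Suc_n)
    then show "eps True p s + eps False p s = 1"
      using lt by (auto simp: eps_def tb_def)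
  qed simp
  also have "\<dots> = (\<Sum>s<n-1. up p s i)"
    by (rule sum.mono_neutral_cong_right[symmetric]) (use pi in \<open>auto simp: up_def\<close>)
  finally show ?thesis .
qed

lemma finite_Vs_set: "finite {v. (if v \<in> Vs then nat (lin h v) else 0) \<noteq> 0}"
  by (rule finite_subset[OF _ finVs]) auto

lemma lookup_ee: "lk (ee h) v = (if v \<in> Vs then nat (lin h v) else 0)"
  unfolding ee_def using finite_Vs_set[of h] by simp

lemma lin_add: "lin (\<lambda>i. h1 i + h2 i) v = lin h1 v + lin h2 v"
  by (simp add: lin_def)

lemma ee_add:
  assumes "\<forall>v\<in>Vs. lin h1 v \<ge> 0" "\<forall>v\<in>Vs. lin h2 v \<ge> 0"
  shows "ee (\<lambda>i. h1 i + h2 i) = ee h1 + ee h2"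
  by (rule poly_mapping_eqI) (use assms in \<open>auto simp: lookup_add lookup_ee lin_add nat_add_distrib\<close>)

lemma ee_cong:
  assumes "\<forall>i<n. h i = h' i + c"
  shows "ee h = ee h'"
proof -
  have "\<forall>v\<in>Vs. lin h v = lin h' v" using assms lo_lt hi_lt by (simp add: lin_def)
  then show ?thesis by (intro poly_mapping_eqI) (simp add: lookup_ee)
qed

lemma ee_zero: "ee (\<lambda>_. 0) = 0"
  by (rule poly_mapping_eqI) (simp add: lookup_ee lin_def)

lemma lin_sum: "lin (\<lambda>i. \<Sum>s\<in>S. f s i) v = (\<Sum>s\<in>S. lin (f s) v)"
  by (simp add: lin_def sum_subtractf)

lemma ee_sum:
  assumes "finite S" "\<forall>s\<in>S. \<forall>v\<in>Vs. lin (f s) v \<ge> 0"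
  shows "ee (\<lambda>i. \<Sum>s\<in>S. f s i) = (\<Sum>s\<in>S. ee (f s))"
  using assms
proof (induction S rule: finite_induct)
  case empty then show ?case by (simp add: ee_zero)
next
  case (insert x F)
  have "ee (\<lambda>i. \<Sum>s\<in>insert x F. f s i) = ee (\<lambda>i. f x i + (\<Sum>s\<in>F. f s i))"
    using insert by simp
  also have "\<dots> = ee (f x) + ee (\<lambda>i. \<Sum>s\<in>F. f s i)"
    by (rule ee_add) (use insert in \<open>auto simp: lin_sum intro!: sum_nonneg\<close>)
  finally show ?case using insert by simp
qed

lemma lin_ee: "\<forall>v\<in>Vs. lin h v \<ge> 0 \<Longrightarrow> v \<in> Vs \<Longrightarrow> int (lk (ee h) v) = lin h v"
  by (simp add: lookup_ee)

lemma Hs_nonneg: "h \<in> Hs b \<Longrightarrow> \<forall>v\<in>Vs. lin h v \<ge> 0"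
  unfolding Hs_def thr_def by (auto elim!: ballE order.trans[rotated])

lemma lin_up: "p \<in> LL \<Longrightarrow> v \<in> Vs \<Longrightarrow> lin (up p s) v \<ge> 0"
  by (auto simp: LL_def lin_def up_def)

lemma hcone_Hs: "p \<in> LL \<Longrightarrow> hcone b p g \<in> Hs b"
  by (simp add: Hs_iff posr_hcone LL_def)


definition Phi :: "bool \<Rightarrow> (nat \<Rightarrow> nat) \<Rightarrow> (nat \<Rightarrow> nat) \<Rightarrow> (var \<Rightarrow>\<^sub>0 nat)" where
  "Phi b p g = ee (hcone b p g)"
definition Wt :: "(nat \<Rightarrow> nat) \<Rightarrow> nat \<Rightarrow> (var \<Rightarrow>\<^sub>0 nat)" where "Wt p s = ee (up p s)"
definition Qp :: "(nat \<Rightarrow> nat) \<Rightarrow> mpoly" where "Qp p = (\<Prod>s<n-1. 1 - mon (Wt p s))"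
definition Qall :: mpoly where "Qall = (\<Prod>p\<in>LL. Qp p)"
definition Pol :: "bool \<Rightarrow> (var \<Rightarrow>\<^sub>0 nat) \<Rightarrow> mpoly" where
  "Pol b u = (\<Sum>p\<in>LL. mon (u + Phi b p (\<lambda>_. 0)) * (\<Prod>q\<in>LL-{p}. Qp q))"

lemma finite_LL: "finite LL"
proof -
  have "LL \<subseteq> {..<n} \<rightarrow>\<^sub>E {..<n}" by (auto simp: LL_def perms_def)
  then show ?thesis by (rule finite_subset) (simp add: finite_PiE)
qed

lemma LL_perms: "p \<in> LL \<Longrightarrow> p \<in> perms"
  by (simp add: LL_def)

lemma Phi_inj:
  assumes p: "p \<in> LL" "p' \<in> LL" and g: "g \<in> Gs (n-1)" "g' \<in> Gs (n-1)"
    and eq: "Phi b p g = Phi b p' g'"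
  shows "p = p' \<and> g = g'"
proof -
  have H: "hcone b p g \<in> Hs b" "hcone b p' g' \<in> Hs b" using hcone_Hs p by auto
  have "\<forall>v\<in>Vs. lin (hcone b p g) v = lin (hcone b p' g') v"
    using lin_ee[OF Hs_nonneg[OF H(1)]] lin_ee[OF Hs_nonneg[OF H(2)]] eq by (metis Phi_def)
  then obtain c where c: "\<forall>i<n. hcone b p g i = hcone b p' g' i + c"
    using rigid[of "hcone b p g" "hcone b p' g'"] by (auto simp: lin_def)
  have "p = posr b (hcone b p g)" using posr_hcone LL_perms p by simp
  also have "\<dots> = posr b (\<lambda>i. hcone b p' g' i + c)" using c by (intro posr_cong) auto
  also have "\<dots> = p'" using posr_shift posr_hcone LL_perms p by simp
  finally have pp: "p = p'" .
  have "g s = g' s" for s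
  proof (cases "s < n - 1")
    case True
    then have s: "Suc s < n" by simp
    have pm: "p \<in> perms" using p LL_perms by auto
    have q: "invp p s < n" "invp p (Suc s) < n" using invp[OF pm] s by auto
    have "hcone b p g (invp p (Suc s)) - hcone b p g (invp p s) = int (g s) + eps b p s"
      using hcone_diff[OF pm _ s, of s] by simp
    moreover have "hcone b p g' (invp p (Suc s)) - hcone b p g' (invp p s) = int (g' s) + eps b p s"
      using hcone_diff[OF pm _ s, of s] by simp
    ultimately show ?thesis using c q pp by fastforce
  next
    case False then show ?thesis using g by (simp add: Gs_def)
  qed
  then show ?thesis using pp by auto
qed

lemma Phi_step:
  assumes p: "p \<in> LL"
  shows "Phi b p (g(s := Suc (g s))) = Wt p s + Phi b p g"
proof -
  have "hcone b p (g(s := Suc (g s))) = (\<lambda>i. hcone b p g i + up p s i)"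
    by (simp add: fun_eq_iff hcone_step)
  then have "Phi b p (g(s := Suc (g s))) = ee (hcone b p g) + ee (up p s)"
    unfolding Phi_def using ee_add Hs_nonneg[OF hcone_Hs[OF p]] lin_up[OF p] by simp
  then show ?thesis by (simp add: Phi_def Wt_def add.commute)
qed

lemma image_Hs: "(\<Union>p\<in>LL. Phi b p ` Gs (n-1)) = ee ` Hs b"
proof
  show "(\<Union>p\<in>LL. Phi b p ` Gs (n-1)) \<subseteq> ee ` Hs b"
    using hcone_Hs by (auto simp: Phi_def)
next
  show "ee ` Hs b \<subseteq> (\<Union>p\<in>LL. Phi b p ` Gs (n-1))"
  proof
    fix a assume "a \<in> ee ` Hs b"
    then obtain h where h: "h \<in> Hs b" "a = ee h" by auto
    let ?p = "posr b h"
    define g where "g \<equiv> (\<lambda>s. if Suc s < n then nat (h (invp ?p (Suc s)) - h (invp ?p s) - eps b ?p s) else 0)"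
    have p: "?p \<in> LL" using h Hs_iff by auto
    have g: "g \<in> Gs (n-1)" "\<forall>i<n. h i = h (invp ?p 0) + hcone b ?p g i"
      using decomp[where b=b and h=h] unfolding g_def by auto
    have "ee h = ee (hcone b ?p g)" using g(2) by (intro ee_cong[where c = "h (invp ?p 0)"]) (simp add: add.commute)
    then show "a \<in> (\<Union>p\<in>LL. Phi b p ` Gs (n-1))" using p g h by (auto simp: Phi_def)
  qed
qed

theorem GM: "cv Qall (ind ((\<lambda>a. u + a) ` ee ` Hs b)) = lk (Pol b u)"
proof -
  have set: "(\<lambda>a. u + a) ` ee ` Hs b = (\<Union>p\<in>LL. (\<lambda>g. u + Phi b p g) ` Gs (n-1))"
    unfolding image_Hs[symmetric, of b] by (auto simp: image_UN image_image)
  have "cv (\<Prod>p\<in>LL. \<Prod>s<n-1. 1 - mon (Wt p s)) (ind (\<Union>p\<in>LL. (\<lambda>g. u + Phi b p g) ` Gs (n-1)))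
      = lk (\<Sum>p\<in>LL. mon (u + Phi b p (\<lambda>_. 0)) * (\<Prod>q\<in>LL-{p}. \<Prod>s<n-1. 1 - mon (Wt q s)))"
  proof (rule cones_gf[OF finite_LL])
    fix p assume p: "p \<in> LL"
    show "inj_on (\<lambda>g. u + Phi b p g) (Gs (n-1))"
    proof (rule inj_onI)
      fix x y assume "x \<in> Gs (n-1)" "y \<in> Gs (n-1)" "u + Phi b p x = u + Phi b p y"
      then show "x = y" using Phi_inj[OF p p] by simp
    qed
  next
    fix p g s assume "p \<in> LL" "g \<in> Gs (n-1)" "s < n-1"
    then show "u + Phi b p (g(s := Suc (g s))) = Wt p s + (u + Phi b p g)"
      by (simp add: Phi_step add_ac)
  next
    fix p p' g g' assume "p \<in> LL" "p' \<in> LL" "g \<in> Gs (n-1)" "g' \<in> Gs (n-1)" "u + Phi b p g = u + Phi b p' g'"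
    then show "p = p'" using Phi_inj[of p p' g g' b] by simp
  qed
  then show ?thesis unfolding set Qall_def Qp_def Pol_def .
qed

lemma me_TF:
  assumes p: "p \<in> LL"
  shows "mono_eval x (Phi True p (\<lambda>_. 0)) * mono_eval x (Phi False p (\<lambda>_. 0)) = (\<Prod>s<n-1. mono_eval x (Wt p s))"
proof -
  have "Phi True p (\<lambda>_. 0) + Phi False p (\<lambda>_. 0) = ee (\<lambda>i. hcone True p (\<lambda>_. 0) i + hcone False p (\<lambda>_. 0) i)"
    unfolding Phi_def by (rule ee_add[symmetric]) (use Hs_nonneg hcone_Hs p in blast)+
  also have "\<dots> = ee (\<lambda>i. \<Sum>s<n-1. up p s i)"
    by (rule ee_cong[where c = 0]) (simp add: hcone_TF LL_perms p)
  also have "\<dots> = (\<Sum>s<n-1. Wt p s)"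
    unfolding Wt_def by (rule ee_sum) (use lin_up p in auto)
  finally show ?thesis by (metis mono_eval_add mono_eval_sum)
qed

lemma Wt_nz:
  assumes p: "p \<in> LL" and s: "s < n - 1"
  shows "Wt p s \<noteq> 0"
proof
  assume W: "Wt p s = 0"
  let ?g0 = "(\<lambda>_. 0) :: nat \<Rightarrow> nat"
  have g: "?g0 \<in> Gs (n-1)" "?g0(s := Suc (?g0 s)) \<in> Gs (n-1)" using s by (auto simp: Gs_def)
  have "Phi False p (?g0(s := Suc (?g0 s))) = Phi False p ?g0" using Phi_step[OF p, where b=False and g="?g0" and s=s] W by simp
  then have "?g0(s := Suc (?g0 s)) = ?g0" using Phi_inj[OF p p g(2) g(1)] by blast
  then show False by (metis fun_upd_same nat.distinct(1))
qed


lemma good_Qp: "good (Qp p)"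
  unfolding Qp_def by (rule good_prod) (rule good_one_minus_mon)

lemma eval_Qp: "peval (Qp p) y = (\<Prod>s<n-1. 1 - mono_eval y (Wt p s))"
  unfolding Qp_def by (simp add: peval_prod_good good_one_minus_mon peval_one_minus_mon)

lemma eval_Qall: "peval Qall y = (\<Prod>p\<in>LL. \<Prod>s<n-1. 1 - mono_eval y (Wt p s))"
  unfolding Qall_def by (simp add: peval_prod_good good_Qp eval_Qp)

lemma eval_Pol: "peval (Pol b u) y = (\<Sum>p\<in>LL. mono_eval y (u + Phi b p (\<lambda>_. 0)) *
     (\<Prod>q\<in>LL-{p}. \<Prod>s<n-1. 1 - mono_eval y (Wt q s)))"
  unfolding Pol_def by (simp add: peval_sum peval_mon_mult peval_prod_good good_Qp eval_Qp)

lemma mono_eval_nz: "\<forall>v. y v \<noteq> 0 \<Longrightarrow> mono_eval y a \<noteq> 0"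
  by (simp add: mono_eval_def)

theorem GR:
  fixes num den :: "var \<Rightarrow>\<^sub>0 nat" and x :: "var \<Rightarrow> real"
  assumes odd: "odd (n - 1)"
    and T: "(\<lambda>a. num + a) ` ee ` Hs False = (\<lambda>a. den + a) ` ee ` Hs True"
    and x: "\<forall>v. x v \<noteq> 0"
  shows "peval (Pol False 0) (recip x) * peval Qall x * mono_eval x den
       = - mono_eval x num * peval (Pol False 0) x * peval Qall (recip x)"
proof -
  have PP: "Pol False num = Pol True den"
    by (rule poly_mapping_eqI) (metis GM T)
  define w where "w q = (\<Prod>s<n-1. mono_eval x (Wt q s))" for q
  define qv where "qv q = (\<Prod>s<n-1. 1 - mono_eval x (Wt q s))" for q
  define c :: real where "c = (-1) ^ (n-1)"
  define N where "N = card LL"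
  define Winv where "Winv = (\<Prod>q\<in>LL. inverse (w q))"
  define A where "A p = mono_eval x (Phi False p (\<lambda>_. 0))" for p
  define B where "B p = mono_eval x (Phi True p (\<lambda>_. 0))" for p
  define PB where "PB = (\<Sum>p\<in>LL. B p * (\<Prod>q\<in>LL-{p}. qv q))"
  have c: "c = -1" using odd by (simp add: c_def)
  have nz: "mono_eval x a \<noteq> 0" for a using x by (rule mono_eval_nz)
  have qrec: "(\<Prod>s<n-1. 1 - mono_eval (recip x) (Wt q s)) = c * qv q * inverse (w q)" for q
  proof -
    have "(\<Prod>s<n-1. 1 - mono_eval (recip x) (Wt q s)) = (\<Prod>s<n-1. (-1) * (1 - mono_eval x (Wt q s)) * inverse (mono_eval x (Wt q s)))"
      by (rule prod.cong) (use nz in \<open>auto simp: mono_eval_recip[OF x] field_simps\<close>)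
    also have "\<dots> = (\<Prod>s<n-1. (-1::real)) * (\<Prod>s<n-1. 1 - mono_eval x (Wt q s)) * (\<Prod>s<n-1. inverse (mono_eval x (Wt q s)))"
      by (simp only: prod.distrib)
    also have "(\<Prod>s<n-1. inverse (mono_eval x (Wt q s))) = inverse (w q)"
      using prod_inversef[of "\<lambda>s. mono_eval x (Wt q s)" "{..<n-1}"] by (simp add: o_def w_def)
    also have "(\<Prod>s<n-1. (-1::real)) = c" by (simp add: c_def)
    finally show ?thesis by (simp add: qv_def)
  qed
  have Qx: "peval Qall x = (\<Prod>q\<in>LL. qv q)" by (simp add: eval_Qall qv_def)
  have Qr: "peval Qall (recip x) = c ^ N * peval Qall x * Winv"
  proof -
    have "peval Qall (recip x) = (\<Prod>q\<in>LL. c * qv q * inverse (w q))"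
      by (simp only: eval_Qall qrec)
    also have "\<dots> = c ^ N * (\<Prod>q\<in>LL. qv q) * Winv"
      by (simp add: prod.distrib N_def Winv_def)
    finally show ?thesis by (simp add: Qx)
  qed
  have AB: "A p * B p = w p" if "p \<in> LL" for p
    using me_TF[OF that, of x] by (simp add: A_def B_def w_def mult.commute)
  have invA: "inverse (A p) = B p * inverse (w p)" if "p \<in> LL" for p
  proof -
    have "w p \<noteq> 0" using AB[OF that] nz[of "Phi False p (\<lambda>_. 0)"] nz[of "Phi True p (\<lambda>_. 0)"]
      by (metis A_def B_def no_zero_divisors)
    then show ?thesis using AB[OF that] nz by (simp add: A_def B_def field_simps)
  qed
  have Pr: "peval (Pol False 0) (recip x) = c ^ (N - 1) * Winv * PB"
  proof -
    have "peval (Pol False 0) (recip x) = (\<Sum>p\<in>LL. mono_eval (recip x) (0 + Phi False p (\<lambda>_. 0)) * (\<Prod>q\<in>LL-{p}. c * qv q * inverse (w q)))"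
      by (simp only: eval_Pol qrec)
    also have "\<dots> = (\<Sum>p\<in>LL. inverse (A p) * (\<Prod>q\<in>LL-{p}. c * qv q * inverse (w q)))"
      by (simp add: mono_eval_recip[OF x] A_def)
    also have "\<dots> = (\<Sum>p\<in>LL. c ^ (N - 1) * Winv * (B p * (\<Prod>q\<in>LL-{p}. qv q)))"
    proof (rule sum.cong)
      fix p assume p: "p \<in> LL"
      have cardm: "card (LL - {p}) = N - 1" using p finite_LL by (simp add: N_def)
      have W: "inverse (w p) * (\<Prod>q\<in>LL-{p}. inverse (w q)) = Winv"
        unfolding Winv_def using p finite_LL by (simp add: prod.remove)
      have "inverse (A p) * (\<Prod>q\<in>LL-{p}. c * qv q * inverse (w q))
          = B p * (inverse (w p) * (\<Prod>q\<in>LL-{p}. inverse (w q))) * c ^ (N-1) * (\<Prod>q\<in>LL-{p}. qv q)"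
        by (simp add: invA[OF p] prod.distrib cardm mult_ac)
      then show "inverse (A p) * (\<Prod>q\<in>LL-{p}. c * qv q * inverse (w q)) = c ^ (N - 1) * Winv * (B p * (\<Prod>q\<in>LL-{p}. qv q))"
        by (simp add: W mult_ac)
    qed simp
    finally show ?thesis by (simp add: PB_def sum_distrib_left)
  qed
  have Pn: "mono_eval x num * peval (Pol False 0) x = mono_eval x den * PB"
  proof -
    have "peval (Pol False num) x = mono_eval x num * peval (Pol False 0) x"
      by (simp add: eval_Pol mono_eval_add sum_distrib_left mult_ac)
    moreover have "peval (Pol True den) x = mono_eval x den * PB"
      by (simp add: eval_Pol mono_eval_add sum_distrib_left mult_ac PB_def B_def qv_def)
    ultimately show ?thesis using PP by simp
  qed
  show ?thesis
  proof (cases "LL = {}")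
    case True
    then show ?thesis by (simp add: Pol_def)
  next
    case False
    then have "N \<ge> 1" using finite_LL by (simp add: N_def Suc_leI card_gt_0_iff)
    then have cN: "c ^ N = -(c ^ (N - 1))" using c by (metis One_nat_def Suc_diff_1 less_eq_Suc_le mult_minus1 power_Suc)
    show ?thesis
      unfolding Pr Qr cN using Pn
      by (simp add: algebra_simps)
  qed
qed


lemma me_half:
  assumes "W \<noteq> 0"
  shows "mono_eval (\<lambda>_. 1/2) W < 1" "mono_eval (\<lambda>_. 1/2) W > 0"
proof -
  have e: "mono_eval (\<lambda>_. 1/2) W = (1/2::real) ^ (\<Sum>v\<in>ks W. lk W v)"
    by (simp add: mono_eval_def power_sum)
  obtain v where v: "v \<in> ks W" using assms by (metis ex_in_conv keys_eq_empty)
  have "lk W v \<le> (\<Sum>v\<in>ks W. lk W v)" using v by (intro member_le_sum) auto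
  moreover have "lk W v \<ge> 1" using v by (simp add: in_keys_iff)
  ultimately have k: "(\<Sum>v\<in>ks W. lk W v) \<ge> 1" by linarith
  have "(1/2::real) ^ (\<Sum>v\<in>ks W. lk W v) \<le> (1/2) ^ 1"
    by (rule power_decreasing[OF k]) auto
  then show "mono_eval (\<lambda>_. 1/2) W < 1" unfolding e by simp
  show "mono_eval (\<lambda>_. 1/2) W > 0" unfolding e by simp
qed

lemma Qall_nz: "Qall \<noteq> 0"
proof
  assume "Qall = 0"
  then have "peval Qall (\<lambda>_. 1/2) = 0" by simp
  moreover have "peval Qall (\<lambda>_. 1/2) \<noteq> 0"
  proof -
    have "1 - mono_eval (\<lambda>_. 1/2) (Wt p s) \<noteq> 0" if "p \<in> LL" "s < n-1" for p s
    proof -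
      have "Wt p s \<noteq> 0" using Wt_nz that by auto
      then show ?thesis using me_half(1) by fastforce
    qed
    then show ?thesis unfolding eval_Qall using finite_LL by simp
  qed
  ultimately show False by simp
qed

end



locale fig =
  fixes k l m :: nat
  assumes k0: "0 < k" and kl: "k + 2 \<le> l" and lm: "l < m"
begin

definition nn :: nat where "nn = 2*m + 2*(l-k)"
definition tT :: "nat \<Rightarrow> nat" where "tT c = c - 1"
definition tHT :: "nat \<Rightarrow> nat" where "tHT c = m + c - k - 1"
definition tHB :: "nat \<Rightarrow> nat" where "tHB c = m + (l - k) + c - k - 1"
definition tB :: "nat \<Rightarrow> nat" where "tB c = m + 2*(l-k) + c - 1"

fun lo :: "var \<Rightarrow> nat" where
  "lo (Yo j) = tT j"
| "lo (Yu j) = tB j"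
| "lo (Wo j) = tHT j"
| "lo (Wu j) = tHB j"
| "lo (Z j) = (if j = 0 then tB 1 else if j = m then tB m else if j < k \<or> l < j then tB (Suc j)
     else if j = k then tHB (Suc k) else if j < l then tHB (Suc j) else tHB l)"
| "lo (Zo j) = (if j < l then tHT (Suc j) else tHT l)"
| "lo (Zu j) = tB (Suc j)"

fun hi :: "var \<Rightarrow> nat" where
  "hi (Yo j) = tT (Suc j)"
| "hi (Yu j) = tB (Suc j)"
| "hi (Wo j) = tHT (Suc j)"
| "hi (Wu j) = tHB (Suc j)"
| "hi (Z j) = (if j = 0 then tT 1 else if j = m then tT m else if j < k \<or> l < j then tT j
     else if j = k then tHT (Suc k) else if j < l then tHT j else tHT l)"
| "hi (Zo j) = tT j"
| "hi (Zu j) = (if j = k then tHB (Suc k) else tHB j)"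

lemma mem_Yo[simp]: "Yo j \<in> relvars k l m \<longleftrightarrow> 1 \<le> j \<and> j \<le> m - 1" by (auto simp: relvars_def)
lemma mem_Yu[simp]: "Yu j \<in> relvars k l m \<longleftrightarrow> 1 \<le> j \<and> j \<le> m - 1" by (auto simp: relvars_def)
lemma mem_Wo[simp]: "Wo j \<in> relvars k l m \<longleftrightarrow> k + 1 \<le> j \<and> j \<le> l - 1" by (auto simp: relvars_def)
lemma mem_Wu[simp]: "Wu j \<in> relvars k l m \<longleftrightarrow> k + 1 \<le> j \<and> j \<le> l - 1" by (auto simp: relvars_def)
lemma mem_Z[simp]: "Z j \<in> relvars k l m \<longleftrightarrow> j \<le> m" by (auto simp: relvars_def)
lemma mem_Zo[simp]: "Zo j \<in> relvars k l m \<longleftrightarrow> k \<le> j \<and> j \<le> l" by (auto simp: relvars_def)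
lemma mem_Zu[simp]: "Zu j \<in> relvars k l m \<longleftrightarrow> k \<le> j \<and> j \<le> l" by (auto simp: relvars_def)

lemma fin_relvars: "finite (relvars k l m)"
  by (simp add: relvars_def)

lemma lohi_lt: "v \<in> relvars k l m \<Longrightarrow> lo v < nn \<and> hi v < nn \<and> lo v \<noteq> hi v"
  using k0 kl lm
  by (cases v) (auto simp: nn_def tT_def tHT_def tHB_def tB_def)

lemma strict_lab: "v \<in> relvars k l m \<Longrightarrow> (hi v < lo v) \<longleftrightarrow> (case v of Z _ \<Rightarrow> True | Zo _ \<Rightarrow> True | Zu _ \<Rightarrow> True | _ \<Rightarrow> False)"
  using k0 kl lm
  by (cases v) (auto simp: nn_def tT_def tHT_def tHB_def tB_def)


definition lin0 :: "(nat \<Rightarrow> int) \<Rightarrow> var \<Rightarrow> int" where "lin0 h v = h (hi v) - h (lo v)"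
definition fr :: "(var \<Rightarrow> int) \<Rightarrow> var \<Rightarrow> int" where "fr f v = (if v \<in> relvars k l m then f v else 0)"
definition RB :: "(var \<Rightarrow> int) \<Rightarrow> nat \<Rightarrow> int" where "RB f c = (\<Sum>j\<in>{1..<c}. fr f (Yu j))"
definition RHB :: "(var \<Rightarrow> int) \<Rightarrow> nat \<Rightarrow> int" where "RHB f c = RB f (Suc c) + fr f (Zu c)"
definition RHT :: "(var \<Rightarrow> int) \<Rightarrow> nat \<Rightarrow> int" where
  "RHT f c = (if c < l then RHB f (Suc c) + fr f (Z c) else RHB f l + fr f (Z l))"
definition RT :: "(var \<Rightarrow> int) \<Rightarrow> nat \<Rightarrow> int" where
  "RT f c = (if c = m then RB f m + fr f (Z m) else if c < k \<or> l < c then RB f (Suc c) + fr f (Z c)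
     else if c < l then RHT f (Suc c) + fr f (Zo c) else RHT f l + fr f (Zo l))"
definition a2 :: nat where "a2 = m + (l - k)"
definition a3 :: nat where "a3 = m + 2*(l - k)"
definition Rr :: "(var \<Rightarrow> int) \<Rightarrow> nat \<Rightarrow> int" where
  "Rr f i = (if i < m then RT f (Suc i) else if i < a2 then RHT f (i - m + k + 1)
     else if i < a3 then RHB f (i - a2 + k + 1) else RB f (i - a3 + 1))"

lemma Rr_tT:
  assumes "1 \<le> c" "c \<le> m" shows "Rr f (tT c) = RT f c"
proof -
  have "tT c < m" "Suc (tT c) = c" using assms by (simp_all add: tT_def)
  then show ?thesis by (simp add: Rr_def)
qed
lemma Rr_tHT:
  assumes "k + 1 \<le> c" "c \<le> l" shows "Rr f (tHT c) = RHT f c"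
proof -
  have "\<not> tHT c < m" "tHT c < a2" "tHT c - m + k + 1 = c" using assms kl lm by (simp_all add: tHT_def a2_def)
  then show ?thesis by (simp add: Rr_def)
qed
lemma Rr_tHB:
  assumes "k + 1 \<le> c" "c \<le> l" shows "Rr f (tHB c) = RHB f c"
proof -
  have "\<not> tHB c < m" "\<not> tHB c < a2" "tHB c < a3" "tHB c - a2 + k + 1 = c"
    using assms kl lm by (simp_all add: tHB_def a2_def a3_def)
  then show ?thesis by (simp add: Rr_def)
qed
lemma Rr_tB:
  assumes "1 \<le> c" "c \<le> m" shows "Rr f (tB c) = RB f c"
proof -
  have "\<not> tB c < m" "\<not> tB c < a2" "\<not> tB c < a3" "tB c - a3 + 1 = c"
    using assms kl lm by (simp_all add: tB_def a2_def a3_def)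
  then show ?thesis by (simp add: Rr_def)
qed

lemma decode:
  assumes "i < nn"
  obtains c where "1 \<le> c" "c \<le> m" "i = tT c"
    | c where "k + 1 \<le> c" "c \<le> l" "i = tHT c"
    | c where "k + 1 \<le> c" "c \<le> l" "i = tHB c"
    | c where "1 \<le> c" "c \<le> m" "i = tB c"
proof -
  consider "i < m" | "m \<le> i" "i < m + (l-k)" | "m + (l-k) \<le> i" "i < m + 2*(l-k)" | "m + 2*(l-k) \<le> i" by linarith
  then show ?thesis
  proof cases
    case 1 then show ?thesis using that(1)[of "Suc i"] by (simp add: tT_def)
  next
    case 2 then show ?thesis using that(2)[of "i - m + k + 1"] kl by (simp add: tHT_def)
  next
    case 3 then show ?thesis using that(3)[of "i - m - (l-k) + k + 1"] kl by (simp add: tHB_def)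
  next
    case 4 then show ?thesis using that(4)[of "i - m - 2*(l-k) + 1"] assms kl by (simp add: tB_def nn_def)
  qed
qed

lemma RB_Suc: "1 \<le> c \<Longrightarrow> RB f (Suc c) = RB f c + fr f (Yu c)"
  by (simp add: RB_def)

lemma RB_lin: "1 \<le> c \<Longrightarrow> c \<le> m \<Longrightarrow> RB (lin0 h) c = h (tB c) - h (tB 1)"
proof (induction c rule: nat_induct_at_least)
  case base then show ?case by (simp add: RB_def)
next
  case (Suc c)
  then have "c \<le> m - 1" by simp
  then show ?case using Suc by (simp add: RB_Suc fr_def lin0_def)
qed

lemma RHB_lin: "k + 1 \<le> c \<Longrightarrow> c \<le> l \<Longrightarrow> RHB (lin0 h) c = h (tHB c) - h (tB 1)"
  using kl lm by (simp add: RHB_def RB_lin fr_def lin0_def)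

lemma RHT_lin:
  assumes "k + 1 \<le> c" "c \<le> l" shows "RHT (lin0 h) c = h (tHT c) - h (tB 1)"
proof (cases "c < l")
  case True
  then show ?thesis using assms kl lm by (simp add: RHT_def RHB_lin fr_def lin0_def)
next
  case False
  then have "c = l" using assms by simp
  then show ?thesis using assms kl lm by (simp add: RHT_def RHB_lin fr_def lin0_def)
qed

lemma RT_lin:
  assumes c: "1 \<le> c" "c \<le> m" shows "RT (lin0 h) c = h (tT c) - h (tB 1)"
proof -
  consider "c = m" | "c \<noteq> m" "c < k \<or> l < c" | "k \<le> c" "c < l" | "c = l" using lm by linarith
  then show ?thesis
  proof cases
    case 1 then show ?thesis using c kl lm k0 by (simp add: RT_def RB_lin fr_def lin0_def)
  next
    case 2 then show ?thesis using c kl lm k0 by (simp add: RT_def RB_lin fr_def lin0_def)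
  next
    case 3 then show ?thesis using c kl lm k0 by (simp add: RT_def RHT_lin fr_def lin0_def)
  next
    case 4 then show ?thesis using c kl lm k0 by (simp add: RT_def RHT_lin fr_def lin0_def)
  qed
qed

lemma Rr_lin: "i < nn \<Longrightarrow> Rr (lin0 h) i = h i - h (tB 1)"
proof (erule decode)
  fix c assume "1 \<le> c" "c \<le> m" "i = tT c" then show ?thesis by (simp add: Rr_tT RT_lin)
next
  fix c assume "k + 1 \<le> c" "c \<le> l" "i = tHT c" then show ?thesis by (simp add: Rr_tHT RHT_lin)
next
  fix c assume "k + 1 \<le> c" "c \<le> l" "i = tHB c" then show ?thesis by (simp add: Rr_tHB RHB_lin)
next
  fix c assume "1 \<le> c" "c \<le> m" "i = tB c" then show ?thesis by (simp add: Rr_tB RB_lin)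
qed

lemma fr_fr: "fr (fr f) = fr f"
  by (simp add: fun_eq_iff fr_def)

lemma Rr_fr: "Rr (fr f) = Rr f"
proof -
  have "RB (fr f) = RB f" by (simp add: fun_eq_iff RB_def fr_fr)
  moreover have "RHB (fr f) = RHB f" using calculation by (simp add: fun_eq_iff RHB_def fr_fr)
  moreover have "RHT (fr f) = RHT f" using calculation by (simp add: fun_eq_iff RHT_def fr_fr)
  moreover have "RT (fr f) = RT f" using calculation by (simp add: fun_eq_iff RT_def fr_fr)
  ultimately show ?thesis by (simp add: fun_eq_iff Rr_def)
qed

lemma rigid0:
  assumes "\<forall>v\<in>relvars k l m. h (hi v) - h (lo v) = h' (hi v) - h' (lo v)"
  shows "\<exists>c. \<forall>i<nn. h i = h' i + (c::int)"
proof -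
  have "fr (lin0 h) = fr (lin0 h')" using assms by (auto simp: fun_eq_iff fr_def lin0_def)
  then have "Rr (lin0 h) = Rr (lin0 h')" by (metis Rr_fr)
  then have "\<forall>i<nn. h i - h (tB 1) = h' i - h' (tB 1)" using Rr_lin by metis
  then show ?thesis by (intro exI[of _ "h (tB 1) - h' (tB 1)"]) (auto simp: algebra_simps)
qed

lemma is_linext: "linext nn lo hi (relvars k l m)"
  by unfold_locales (use fin_relvars lohi_lt rigid0 in auto)


lemma fr_in: "v \<in> relvars k l m \<Longrightarrow> fr f v = f v"
  by (simp add: fr_def)

lemma RB_1: "RB f 1 = 0" by (simp add: RB_def)

context
  fixes a :: "var \<Rightarrow>\<^sub>0 nat"
  assumes a: "a \<in> sol k l m"
begin

definition F :: "var \<Rightarrow> int" where "F v = int (lk a v)"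

lemma F_out: "v \<notin> relvars k l m \<Longrightarrow> F v = 0"
  using a unfolding sol_def F_def by (auto simp: in_keys_iff)

lemma solA: "(\<forall>j\<in>{0..m}. lk a (Z j) > 0) \<and> (\<forall>j\<in>{k..l}. lk a (Zo j) > 0 \<and> lk a (Zu j) > 0)
       \<and> (\<forall>j. j + 2 \<le> k \<longrightarrow> lk a (Z j) + lk a (Yo j) = lk a (Z (j+1)) + lk a (Yu (j+1)))
       \<and> lk a (Z (k-1)) + lk a (Yo (k-1)) = lk a (Zo k) + lk a (Z k) + lk a (Zu k) + lk a (Yu k)
       \<and> lk a (Zu l) + lk a (Z l) + lk a (Zo l) + lk a (Yo l) = lk a (Z (l+1)) + lk a (Yu (l+1))
       \<and> (\<forall>j. l+1 \<le> j \<and> j \<le> m-1 \<longrightarrow> lk a (Z j) + lk a (Yo j) = lk a (Z (j+1)) + lk a (Yu (j+1)))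
       \<and> lk a (Zu k) = lk a (Zu (k+1)) + lk a (Yu (k+1))
       \<and> (\<forall>j. k+1 \<le> j \<and> j \<le> l-1 \<longrightarrow> lk a (Zu j) + lk a (Wu j) = lk a (Zu (j+1)) + lk a (Yu (j+1)))
       \<and> (\<forall>j. k \<le> j \<and> j + 2 \<le> l \<longrightarrow> lk a (Zo j) + lk a (Yo j) = lk a (Zo (j+1)) + lk a (Wo (j+1)))
       \<and> lk a (Zo (l-1)) + lk a (Yo (l-1)) = lk a (Zo l)
       \<and> lk a (Z k) = lk a (Z (k+1)) + lk a (Wu (k+1))
       \<and> (\<forall>j. k+1 \<le> j \<and> j + 2 \<le> l \<longrightarrow> lk a (Z j) + lk a (Wo j) = lk a (Z (j+1)) + lk a (Wu (j+1)))
       \<and> lk a (Z (l-1)) + lk a (Wo (l-1)) = lk a (Z l)"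
  using a unfolding sol_def Let_def mem_Collect_eq by (rule conjunct2)

lemmas A_posZ = solA[THEN conjunct1]
lemmas A_posZoZu = solA[THEN conjunct2, THEN conjunct1]
lemmas A_e1 = solA[THEN conjunct2, THEN conjunct2, THEN conjunct1]
lemmas A_e2 = solA[THEN conjunct2, THEN conjunct2, THEN conjunct2, THEN conjunct1]
lemmas A_e3 = solA[THEN conjunct2, THEN conjunct2, THEN conjunct2, THEN conjunct2, THEN conjunct1]
lemmas A_e4 = solA[THEN conjunct2, THEN conjunct2, THEN conjunct2, THEN conjunct2, THEN conjunct2, THEN conjunct1]
lemmas A_e5 = solA[THEN conjunct2, THEN conjunct2, THEN conjunct2, THEN conjunct2, THEN conjunct2, THEN conjunct2, THEN conjunct1]
lemmas A_e6 = solA[THEN conjunct2, THEN conjunct2, THEN conjunct2, THEN conjunct2, THEN conjunct2, THEN conjunct2, THEN conjunct2, THEN conjunct1]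
lemmas A_e7 = solA[THEN conjunct2, THEN conjunct2, THEN conjunct2, THEN conjunct2, THEN conjunct2, THEN conjunct2, THEN conjunct2, THEN conjunct2, THEN conjunct1]
lemmas A_e8 = solA[THEN conjunct2, THEN conjunct2, THEN conjunct2, THEN conjunct2, THEN conjunct2, THEN conjunct2, THEN conjunct2, THEN conjunct2, THEN conjunct2, THEN conjunct1]
lemmas A_e9 = solA[THEN conjunct2, THEN conjunct2, THEN conjunct2, THEN conjunct2, THEN conjunct2, THEN conjunct2, THEN conjunct2, THEN conjunct2, THEN conjunct2, THEN conjunct2, THEN conjunct1]
lemmas A_e10 = solA[THEN conjunct2, THEN conjunct2, THEN conjunct2, THEN conjunct2, THEN conjunct2, THEN conjunct2, THEN conjunct2, THEN conjunct2, THEN conjunct2, THEN conjunct2, THEN conjunct2, THEN conjunct1]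
lemmas A_e11 = solA[THEN conjunct2, THEN conjunct2, THEN conjunct2, THEN conjunct2, THEN conjunct2, THEN conjunct2, THEN conjunct2, THEN conjunct2, THEN conjunct2, THEN conjunct2, THEN conjunct2, THEN conjunct2]

lemma posZ: "j \<le> m \<Longrightarrow> F (Z j) \<ge> 1"
  using A_posZ by (simp add: F_def Suc_le_eq)
lemma posZo: "k \<le> j \<Longrightarrow> j \<le> l \<Longrightarrow> F (Zo j) \<ge> 1"
  using A_posZoZu by (simp add: F_def Suc_le_eq)
lemma posZu: "k \<le> j \<Longrightarrow> j \<le> l \<Longrightarrow> F (Zu j) \<ge> 1"
  using A_posZoZu by (simp add: F_def Suc_le_eq)
lemma e1: "j + 2 \<le> k \<Longrightarrow> F (Z j) + F (Yo j) = F (Z (j+1)) + F (Yu (j+1))"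
  using A_e1 unfolding F_def by (simp add: of_nat_add[symmetric] del: of_nat_add)
lemma e2: "F (Z (k-1)) + F (Yo (k-1)) = F (Zo k) + F (Z k) + F (Zu k) + F (Yu k)"
  using A_e2 unfolding F_def by (simp add: of_nat_add[symmetric] del: of_nat_add)
lemma e3: "F (Zu l) + F (Z l) + F (Zo l) + F (Yo l) = F (Z (l+1)) + F (Yu (l+1))"
  using A_e3 unfolding F_def by (simp add: of_nat_add[symmetric] del: of_nat_add)
lemma e4: "l+1 \<le> j \<Longrightarrow> j \<le> m-1 \<Longrightarrow> F (Z j) + F (Yo j) = F (Z (j+1)) + F (Yu (j+1))"
  using A_e4 unfolding F_def by (simp add: of_nat_add[symmetric] del: of_nat_add)
lemma e5: "F (Zu k) = F (Zu (k+1)) + F (Yu (k+1))"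
  using A_e5 unfolding F_def by (simp add: of_nat_add[symmetric] del: of_nat_add)
lemma e6: "k+1 \<le> j \<Longrightarrow> j \<le> l-1 \<Longrightarrow> F (Zu j) + F (Wu j) = F (Zu (j+1)) + F (Yu (j+1))"
  using A_e6 unfolding F_def by (simp add: of_nat_add[symmetric] del: of_nat_add)
lemma e7: "k \<le> j \<Longrightarrow> j + 2 \<le> l \<Longrightarrow> F (Zo j) + F (Yo j) = F (Zo (j+1)) + F (Wo (j+1))"
  using A_e7 unfolding F_def by (simp add: of_nat_add[symmetric] del: of_nat_add)
lemma e8: "F (Zo (l-1)) + F (Yo (l-1)) = F (Zo l)"
  using A_e8 unfolding F_def by (simp add: of_nat_add[symmetric] del: of_nat_add)
lemma e9: "F (Z k) = F (Z (k+1)) + F (Wu (k+1))"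
  using A_e9 unfolding F_def by (simp add: of_nat_add[symmetric] del: of_nat_add)
lemma e10: "k+1 \<le> j \<Longrightarrow> j + 2 \<le> l \<Longrightarrow> F (Z j) + F (Wo j) = F (Z (j+1)) + F (Wu (j+1))"
  using A_e10 unfolding F_def by (simp add: of_nat_add[symmetric] del: of_nat_add)
lemma e11: "F (Z (l-1)) + F (Wo (l-1)) = F (Z l)"
  using A_e11 unfolding F_def by (simp add: of_nat_add[symmetric] del: of_nat_add)


lemma Frel: "v \<in> relvars k l m \<Longrightarrow> fr F v = F v" by (rule fr_in)

lemma dYu: "1 \<le> j \<Longrightarrow> j < m \<Longrightarrow> RB F (Suc j) - RB F j = F (Yu j)"
  by (simp add: RB_Suc fr_in)

lemma dZu: "k < j \<Longrightarrow> j \<le> l \<Longrightarrow> RHB F j - RB F (Suc j) = F (Zu j)"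
  by (simp add: RHB_def fr_in)

lemma dZuk: "RHB F (Suc k) - RB F (Suc k) = F (Zu k)"
proof -
  have "RB F (Suc (Suc k)) - RB F (Suc k) = F (Yu (Suc k))" by (rule dYu) (use kl lm k0 kl lm in auto)
  moreover have "RHB F (Suc k) - RB F (Suc (Suc k)) = F (Zu (Suc k))" by (rule dZu) (use kl k0 kl lm in auto)
  ultimately show ?thesis using e5 by simp
qed

lemma dWu:
  assumes "k+1 \<le> j" "j \<le> l-1" shows "RHB F (Suc j) - RHB F j = F (Wu j)"
proof -
  have "RB F (Suc (Suc j)) - RB F (Suc j) = F (Yu (Suc j))" by (rule dYu) (use assms kl lm k0 kl lm in auto)
  moreover have "RHB F (Suc j) - RB F (Suc (Suc j)) = F (Zu (Suc j))" by (rule dZu) (use assms kl k0 kl lm in auto)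
  moreover have "RHB F j - RB F (Suc j) = F (Zu j)" by (rule dZu) (use assms kl k0 kl lm in auto)
  ultimately show ?thesis using e6[OF assms] by simp
qed

lemma dZmid: "k < j \<Longrightarrow> j < l \<Longrightarrow> RHT F j - RHB F (Suc j) = F (Z j)"
  using lm by (simp add: RHT_def fr_in)

lemma dZl: "RHT F l - RHB F l = F (Z l)"
  using lm by (simp add: RHT_def fr_in)

lemma dZk: "RHT F (Suc k) - RHB F (Suc k) = F (Z k)"
proof -
  have "RHB F (Suc (Suc k)) - RHB F (Suc k) = F (Wu (Suc k))" by (rule dWu) (use kl k0 kl lm in auto)
  moreover have "RHT F (Suc k) - RHB F (Suc (Suc k)) = F (Z (Suc k))" by (rule dZmid) (use kl k0 kl lm in auto)
  ultimately show ?thesis using e9 by simp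
qed

lemma dWo:
  assumes "k+1 \<le> j" "j \<le> l-1" shows "RHT F (Suc j) - RHT F j = F (Wo j)"
proof (cases "Suc j < l")
  case True
  have "RHB F (Suc (Suc j)) - RHB F (Suc j) = F (Wu (Suc j))" by (rule dWu) (use True assms k0 kl lm in auto)
  moreover have "RHT F (Suc j) - RHB F (Suc (Suc j)) = F (Z (Suc j))" by (rule dZmid) (use True assms k0 kl lm in auto)
  moreover have "RHT F j - RHB F (Suc j) = F (Z j)" by (rule dZmid) (use True assms k0 kl lm in auto)
  moreover have "F (Z j) + F (Wo j) = F (Z (Suc j)) + F (Wu (Suc j))" using e10[of j] True assms by simp
  ultimately show ?thesis by simp
next
  case False
  then have l: "l = Suc j" using assms kl by simp
  have "RHT F j - RHB F (Suc j) = F (Z j)" by (rule dZmid) (use l assms k0 kl lm in auto)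
  moreover have "RHT F (Suc j) - RHB F (Suc j) = F (Z (Suc j))" using dZl l by simp
  moreover have "F (Z j) + F (Wo j) = F (Z (Suc j))" using e11 l by simp
  ultimately show ?thesis by simp
qed

lemma dZo: "k \<le> j \<Longrightarrow> j < l \<Longrightarrow> RT F j - RHT F (Suc j) = F (Zo j)"
  using lm by (simp add: RT_def fr_in)

lemma dZol: "RT F l - RHT F l = F (Zo l)"
  using lm kl by (simp add: RT_def fr_in)

lemma dZout: "1 \<le> j \<Longrightarrow> j < k \<or> l < j \<Longrightarrow> j < m \<Longrightarrow> RT F j - RB F (Suc j) = F (Z j)"
  by (auto simp: RT_def fr_in)

lemma dZm: "RT F m - RB F m = F (Z m)"
  by (simp add: RT_def fr_in)

lemma Yo0: "F (Yo 0) = 0" by (simp add: F_out)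
lemma Yum: "F (Yu m) = 0" by (rule F_out) (use lm in simp)

lemma dZ0: "RT F 1 - RB F 1 = F (Z 0)"
proof (cases "1 < k")
  case True
  have "RT F 1 - RB F 2 = F (Z 1)" using dZout[of 1] True lm kl by (simp add: numeral_2_eq_2)
  moreover have "RB F 2 - RB F 1 = F (Yu 1)" using dYu[of 1] lm kl by (simp add: numeral_2_eq_2)
  moreover have "F (Z 0) = F (Z 1) + F (Yu 1)" using e1[of 0] True Yo0 by simp
  ultimately show ?thesis by simp
next
  case False
  then have k1: "k = 1" using k0 by simp
  have "RT F 1 - RHT F 2 = F (Zo 1)" using dZo[of 1] k1 kl by (simp add: numeral_2_eq_2)
  moreover have "RHT F 2 - RHB F 2 = F (Z 1)" using dZk k1 by (simp add: numeral_2_eq_2)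
  moreover have "RHB F 2 - RB F 2 = F (Zu 1)" using dZuk k1 by (simp add: numeral_2_eq_2)
  moreover have "RB F 2 - RB F 1 = F (Yu 1)" using dYu[of 1] lm kl by (simp add: numeral_2_eq_2)
  ultimately show ?thesis using e2 k1 Yo0 by simp
qed

lemma dYo:
  assumes j: "1 \<le> j" "j \<le> m-1" shows "RT F (Suc j) - RT F j = F (Yo j)"
proof -
  consider "Suc j < k" | "Suc j = k" | "k \<le> j" "j + 2 \<le> l" | "Suc j = l" | "j = l" | "l < j" using kl by linarith
  then show ?thesis
  proof cases
    case 1
    have "RT F j - RB F (Suc j) = F (Z j)" by (rule dZout) (use 1 j k0 kl lm in auto)
    moreover have "RT F (Suc j) - RB F (Suc (Suc j)) = F (Z (Suc j))" by (rule dZout) (use 1 j lm k0 kl lm in auto)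
    moreover have "RB F (Suc (Suc j)) - RB F (Suc j) = F (Yu (Suc j))" by (rule dYu) (use 1 j kl lm k0 kl lm in auto)
    moreover have "F (Z j) + F (Yo j) = F (Z (Suc j)) + F (Yu (Suc j))" using e1[of j] 1 by simp
    ultimately show ?thesis by simp
  next
    case 2
    have "RT F k - RHT F (Suc k) = F (Zo k)" by (rule dZo) (use kl k0 kl lm in auto)
    moreover have "RT F j - RB F k = F (Z j)" using dZout[of j] 2 j lm kl by simp
    moreover have "RB F (Suc k) - RB F k = F (Yu k)" by (rule dYu) (use k0 kl lm k0 kl lm in auto)
    moreover have "F (Z j) + F (Yo j) = F (Zo k) + F (Z k) + F (Zu k) + F (Yu k)"
    proof -
      have "j = k - 1" using 2 by simp
      then show ?thesis using e2 by simp
    qed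
    ultimately show ?thesis using dZk dZuk 2 by simp
  next
    case 3
    have "RT F j - RHT F (Suc j) = F (Zo j)" by (rule dZo) (use 3 k0 kl lm in auto)
    moreover have "RT F (Suc j) - RHT F (Suc (Suc j)) = F (Zo (Suc j))" by (rule dZo) (use 3 k0 kl lm in auto)
    moreover have "RHT F (Suc (Suc j)) - RHT F (Suc j) = F (Wo (Suc j))" by (rule dWo) (use 3 k0 kl lm in auto)
    moreover have "F (Zo j) + F (Yo j) = F (Zo (Suc j)) + F (Wo (Suc j))" using e7[of j] 3 by simp
    ultimately show ?thesis by simp
  next
    case 4
    have "RT F j - RHT F (Suc j) = F (Zo j)" by (rule dZo) (use 4 kl k0 kl lm in auto)
    moreover have "F (Zo j) + F (Yo j) = F (Zo (Suc j))"
    proof -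
      have "j = l - 1" using 4 by simp
      then show ?thesis using e8 4 by simp
    qed
    ultimately show ?thesis using dZol 4 by simp
  next
    case 5
    have "RHB F l - RB F (Suc l) = F (Zu l)" by (rule dZu) (use kl k0 kl lm in auto)
    then have L: "RT F l - RB F (Suc l) = F (Zo l) + F (Z l) + F (Zu l)"
      using dZol dZl by simp
    show ?thesis
    proof (cases "Suc l < m")
      case True
      have "RT F (Suc l) - RB F (Suc (Suc l)) = F (Z (Suc l))" by (rule dZout) (use True k0 kl lm in auto)
      moreover have "RB F (Suc (Suc l)) - RB F (Suc l) = F (Yu (Suc l))" by (rule dYu) (use True k0 kl lm in auto)
      ultimately show ?thesis using L e3 5 by simp
    next
      case False
      then have "Suc l = m" using lm by simp
      then show ?thesis using L dZm e3 5 Yum by simp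
    qed
  next
    case 6
    have A: "RT F j - RB F (Suc j) = F (Z j)" by (rule dZout) (use 6 j lm k0 kl lm in auto)
    have E: "F (Z j) + F (Yo j) = F (Z (Suc j)) + F (Yu (Suc j))" using e4[of j] 6 j by simp
    show ?thesis
    proof (cases "Suc j < m")
      case True
      have "RT F (Suc j) - RB F (Suc (Suc j)) = F (Z (Suc j))" by (rule dZout) (use True 6 k0 kl lm in auto)
      moreover have "RB F (Suc (Suc j)) - RB F (Suc j) = F (Yu (Suc j))" by (rule dYu) (use True k0 kl lm in auto)
      ultimately show ?thesis using A E by simp
    next
      case False
      then have "Suc j = m" using j lm by simp
      then show ?thesis using A E dZm Yum by simp
    qed
  qed
qed


lemma lin0_RrF: "v \<in> relvars k l m \<Longrightarrow> lin0 (Rr F) v = F v"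
proof (cases v)
  case (Yo j)
  assume "v \<in> relvars k l m"
  then have j: "1 \<le> j" "j \<le> m - 1" using Yo by auto
  then show ?thesis using Yo dYo[OF j] lm by (simp add: lin0_def Rr_tT)
next
  case (Yu j)
  assume "v \<in> relvars k l m"
  then have j: "1 \<le> j" "j < m" using Yu by auto
  then show ?thesis using Yu dYu[OF j] by (simp add: lin0_def Rr_tB)
next
  case (Wo j)
  assume "v \<in> relvars k l m"
  then have j: "k + 1 \<le> j" "j \<le> l - 1" using Wo by auto
  then show ?thesis using Wo dWo[OF j] kl by (simp add: lin0_def Rr_tHT)
next
  case (Wu j)
  assume "v \<in> relvars k l m"
  then have j: "k + 1 \<le> j" "j \<le> l - 1" using Wu by auto
  then show ?thesis using Wu dWu[OF j] kl by (simp add: lin0_def Rr_tHB)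
next
  case (Z j)
  assume "v \<in> relvars k l m"
  then have j: "j \<le> m" using Z by auto
  consider "j = 0" | "j \<noteq> 0" "j = m" | "j \<noteq> 0" "j \<noteq> m" "j < k \<or> l < j" | "j = k" | "k < j" "j < l" | "j = l"
    using kl lm by linarith
  then show ?thesis
  proof cases
    case 1 then show ?thesis using Z dZ0 lm by (simp add: lin0_def Rr_tT Rr_tB)
  next
    case 2 then show ?thesis using Z dZm lm by (simp add: lin0_def Rr_tT Rr_tB)
  next
    case 3 then show ?thesis using Z dZout[of j] j by (simp add: lin0_def Rr_tT Rr_tB)
  next
    case 4 then show ?thesis using Z dZk k0 kl lm by (simp add: lin0_def Rr_tHT Rr_tHB)
  next
    case 5 then show ?thesis using Z dZmid[of j] k0 kl lm by (simp add: lin0_def Rr_tHT Rr_tHB)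
  next
    case 6 then show ?thesis using Z dZl k0 kl lm by (simp add: lin0_def Rr_tHT Rr_tHB)
  qed
next
  case (Zo j)
  assume "v \<in> relvars k l m"
  then have j: "k \<le> j" "j \<le> l" using Zo by auto
  show ?thesis
  proof (cases "j < l")
    case True then show ?thesis using Zo dZo[of j] j k0 kl lm by (simp add: lin0_def Rr_tHT Rr_tT)
  next
    case False then have "j = l" using j by simp
    then show ?thesis using Zo dZol j k0 kl lm by (simp add: lin0_def Rr_tHT Rr_tT)
  qed
next
  case (Zu j)
  assume "v \<in> relvars k l m"
  then have j: "k \<le> j" "j \<le> l" using Zu by auto
  show ?thesis
  proof (cases "j = k")
    case True then show ?thesis using Zu dZuk k0 kl lm by (simp add: lin0_def Rr_tHB Rr_tB)
  next
    case False then show ?thesis using Zu dZu[of j] j k0 kl lm by (simp add: lin0_def Rr_tHB Rr_tB)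
  qed
qed

end

end



sublocale fig \<subseteq> L: linext nn lo hi "relvars k l m"
  by (rule fig.is_linext) (rule fig_axioms)

context fig begin

lemma Llin: "L.lin h v = lin0 h v" by (simp add: L.lin_def lin0_def)

lemma thrF: "L.thr False v = (if hi v < lo v then 1 else 0)"
  by (simp add: L.thr_def L.tb_def)

lemma thrT: "v \<in> relvars k l m \<Longrightarrow> L.thr True v = (if lo v < hi v then 1 else 0)"
  using lohi_lt[of v] by (auto simp: L.thr_def L.tb_def)

definition strict :: "var \<Rightarrow> bool" where
  "strict v = (case v of Z _ \<Rightarrow> True | Zo _ \<Rightarrow> True | Zu _ \<Rightarrow> True | _ \<Rightarrow> False)"

lemma strict_simps[simp]: "strict (Z j)" "strict (Zo j)" "strict (Zu j)" "\<not> strict (Yo j)"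
  "\<not> strict (Yu j)" "\<not> strict (Wo j)" "\<not> strict (Wu j)"
  by (simp_all add: strict_def)

lemma thrF': "v \<in> relvars k l m \<Longrightarrow> L.thr False v = (if strict v then 1 else 0)"
  using strict_lab[of v] by (simp add: thrF strict_def split: var.splits)

lemma thrT': "v \<in> relvars k l m \<Longrightarrow> L.thr True v = (if strict v then 0 else 1)"
  using strict_lab[of v] lohi_lt[of v] by (auto simp: thrT strict_def split: var.splits)

lemma ZL0[simp]: "lo (Z 0) = tB 1" "hi (Z 0) = tT 1" by simp_all
lemma ZLm[simp]: "lo (Z m) = tB m" "hi (Z m) = tT m" using lm by simp_all
lemma ZLout: "1 \<le> j \<Longrightarrow> j < m \<Longrightarrow> j < k \<or> l < j \<Longrightarrow> lo (Z j) = tB (Suc j) \<and> hi (Z j) = tT j"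
  by auto
lemma ZLk': "lo (Z k) = tHB (Suc k)" "hi (Z k) = tHT (Suc k)" using k0 kl lm by simp_all
lemma ZLmid: "k < j \<Longrightarrow> j < l \<Longrightarrow> lo (Z j) = tHB (Suc j) \<and> hi (Z j) = tHT j"
  using lm by auto
lemma ZLl: "lo (Z l) = tHB l" "hi (Z l) = tHT l" using k0 kl lm by simp_all
lemma ZoL: "j < l \<Longrightarrow> lo (Zo j) = tHT (Suc j)" by simp
lemma ZoLl: "lo (Zo l) = tHT l" by simp
lemma ZuLk: "hi (Zu k) = tHB (Suc k)" by simp
lemma ZuL: "j \<noteq> k \<Longrightarrow> hi (Zu j) = tHB j" by simp


lemma S2:
  assumes a: "a \<in> sol k l m"
  shows "Rr (F a) \<in> L.Hs False" "L.ee (Rr (F a)) = a"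
proof -
  have "L.lin (Rr (F a)) v \<ge> L.thr False v" if v: "v \<in> relvars k l m" for v
  proof -
    have "F a v \<ge> (if strict v then 1 else 0)"
    proof (cases v)
      case (Z j) then show ?thesis using v posZ[OF a, of j] by simp
    next
      case (Zo j) then show ?thesis using v posZo[OF a, of j] by simp
    next
      case (Zu j) then show ?thesis using v posZu[OF a, of j] by simp
    qed (simp_all add: F_def[OF a])
    then show ?thesis using v by (simp add: Llin lin0_RrF[OF a] thrF')
  qed
  then show H: "Rr (F a) \<in> L.Hs False" by (simp add: L.Hs_def)
  show "L.ee (Rr (F a)) = a"
  proof (rule poly_mapping_eqI)
    fix v
    show "lk (L.ee (Rr (F a))) v = lk a v"
    proof (cases "v \<in> relvars k l m")
      case True then show ?thesis by (simp add: L.lookup_ee Llin lin0_RrF[OF a] F_def[OF a])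
    next
      case False then show ?thesis using F_out[OF a False] by (simp add: L.lookup_ee F_def[OF a])
    qed
  qed
qed

lemma GG:
  assumes h: "h \<in> L.Hs False"
  shows "int (lk (L.ee h) v) = (if v \<in> relvars k l m then lin0 h v else 0)"
  using L.Hs_nonneg[OF h] by (simp add: L.lookup_ee Llin)

lemma S1:
  assumes h: "h \<in> L.Hs False"
  shows "L.ee h \<in> sol k l m"
proof -
  let ?e = "L.ee h"
  have ar: "Suc k \<le> m - Suc 0" "k \<le> m - Suc 0" "l \<le> m - Suc 0" "Suc 0 \<le> m - Suc 0" "\<not> m \<le> m - Suc 0"
    "Suc k < l" "k < l" "k \<le> m" "l \<le> m" "Suc k \<le> l - Suc 0" "k \<le> l - Suc 0" "l - Suc 0 \<le> m"
    "Suc (l - Suc 0) = l" "k < l - Suc 0" "l - Suc 0 < l" "1 \<le> l - Suc 0" "l - Suc 0 \<le> m - Suc 0" "Suc (Suc k) \<le> l" "Suc k \<le> m" "k < m" "l < m" "0 < k"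
    using k0 kl lm by auto
  define G where "G v = int (lk ?e v)" for v
  have G: "G v = (if v \<in> relvars k l m then h (hi v) - h (lo v) else 0)" for v
    using GG[OF h, of v] by (simp add: G_def lin0_def)
  have cons: "lin0 h v \<ge> (if strict v then 1 else 0)" if "v \<in> relvars k l m" for v
    using h that by (simp add: L.Hs_def Llin thrF')
  have keys: "ks ?e \<subseteq> relvars k l m"
    by (auto simp: in_keys_iff L.lookup_ee split: if_splits)
  have natI: "\<And>a b c d. G a + G b = G c + G d \<Longrightarrow> lk ?e a + lk ?e b = lk ?e c + lk ?e d"
    unfolding G_def by linarith
  have natI3: "\<And>a b c. G a = G b + G c \<Longrightarrow> lk ?e a = lk ?e b + lk ?e c"
    unfolding G_def by linarith
  have natI4: "\<And>a b c d f. G a + G b = G c + G d + G f + G g \<Longrightarrow> lk ?e a + lk ?e b = lk ?e c + lk ?e d + lk ?e f + lk ?e g" for g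
    unfolding G_def by linarith
  have natI4': "\<And>a b c d f g. G a + G b + G c + G d = G f + G g \<Longrightarrow> lk ?e a + lk ?e b + lk ?e c + lk ?e d = lk ?e f + lk ?e g"
    unfolding G_def by linarith
  have pos: "lk ?e v > 0" if "v \<in> relvars k l m" "strict v" for v
  proof -
    have "lin0 h v \<ge> 1" using cons[OF that(1)] that(2) by simp
    then show ?thesis using that by (simp add: L.lookup_ee Llin)
  qed
  have c1: "\<forall>j\<in>{0..m}. lk ?e (Z j) > 0" using pos by simp
  have c2: "\<forall>j\<in>{k..l}. lk ?e (Zo j) > 0 \<and> lk ?e (Zu j) > 0" using pos by simp
  have c3: "\<forall>j. j + 2 \<le> k \<longrightarrow> lk ?e (Z j) + lk ?e (Yo j) = lk ?e (Z (j+1)) + lk ?e (Yu (j+1))"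
  proof (intro allI impI natI)
    fix j assume j: "j + 2 \<le> k"
    show "G (Z j) + G (Yo j) = G (Z (j+1)) + G (Yu (j+1))"
    proof (cases "j = 0")
      case True
      have "Suc 0 \<le> m - Suc 0" using kl lm by simp
      then show ?thesis using True j ZLout[of 1] kl lm by (simp add: G)
    next
      case False
      have "Suc j \<le> m - Suc 0" "j \<le> m - Suc 0" using j kl lm by simp_all
      then show ?thesis using False j ZLout[of j] ZLout[of "Suc j"] kl lm by (simp add: G)
    qed
  qed
  have c4: "lk ?e (Z (k-1)) + lk ?e (Yo (k-1)) = lk ?e (Zo k) + lk ?e (Z k) + lk ?e (Zu k) + lk ?e (Yu k)"
  proof (rule natI4)
    show "G (Z (k-1)) + G (Yo (k-1)) = G (Zo k) + G (Z k) + G (Zu k) + G (Yu k)"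
    proof (cases "k = 1")
      case True
      have A: "tT k = tT 1" "tB k = tB 1" "k - 1 = 0" using True by (simp_all add: tT_def tB_def)
      have B: "Suc 0 \<le> m - Suc 0" "k \<le> m - Suc 0" using kl lm by simp_all
      show ?thesis using A B k0 kl lm ZLk' by (simp add: G)
    next
      case False
      have B: "k - 1 \<le> m - Suc 0" "k \<le> m - Suc 0" "1 \<le> k - 1" "k - 1 < m" "k - 1 < k \<or> l < k - 1" "k - 1 \<le> m"
        using kl lm k0 False by simp_all
      have Z: "lo (Z (k-1)) = tB k" "hi (Z (k-1)) = tT (k - 1)" using ZLout[OF B(3,4,5)] k0 by simp_all
      show ?thesis using B Z k0 kl lm ZLk' by (simp add: G)
    qed
  qed
  have c5: "lk ?e (Zu l) + lk ?e (Z l) + lk ?e (Zo l) + lk ?e (Yo l) = lk ?e (Z (l+1)) + lk ?e (Yu (l+1))"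
  proof (rule natI4')
    show "G (Zu l) + G (Z l) + G (Zo l) + G (Yo l) = G (Z (l+1)) + G (Yu (l+1))"
    proof (cases "Suc l = m")
      case True
      have B: "l \<le> m - Suc 0" "\<not> m \<le> m - Suc 0" "1 \<le> l" using True kl by simp_all
      show ?thesis using True B kl lm ZLl by (simp add: G)
    next
      case False
      have B: "Suc l \<le> m - Suc 0" "l \<le> m - Suc 0" "Suc l < m" "1 \<le> l" using False kl lm by simp_all
      show ?thesis using B k0 kl lm ZLl ZLout[of "Suc l"] by (simp add: G)
    qed
  qed
  have c6: "\<forall>j. l+1 \<le> j \<and> j \<le> m-1 \<longrightarrow> lk ?e (Z j) + lk ?e (Yo j) = lk ?e (Z (j+1)) + lk ?e (Yu (j+1))"
  proof (intro allI impI natI)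
    fix j assume j: "l+1 \<le> j \<and> j \<le> m-1"
    show "G (Z j) + G (Yo j) = G (Z (j+1)) + G (Yu (j+1))"
    proof (cases "Suc j = m")
      case True
      have B: "\<not> m \<le> m - Suc 0" using lm by simp
      show ?thesis using True B j ZLout[of j] kl lm by (simp add: G)
    next
      case False
      have B: "Suc j \<le> m - Suc 0" "Suc j < m" "j < m" "j \<le> m" "1 \<le> j" "Suc j \<le> m" "j \<noteq> m" "Suc j \<noteq> m" "l < j"
        using False j kl lm by auto
      have Z1: "lo (Z j) = tB (Suc j) \<and> hi (Z j) = tT j" by (rule ZLout) (use B in auto)
      have Z2: "lo (Z (Suc j)) = tB (Suc (Suc j)) \<and> hi (Z (Suc j)) = tT (Suc j)" by (rule ZLout) (use B in auto)
      show ?thesis using B Z1 Z2 by (simp add: G)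
    qed
  qed
  have c7: "lk ?e (Zu k) = lk ?e (Zu (k+1)) + lk ?e (Yu (k+1))"
    by (rule natI3) (use ar in \<open>simp add: G\<close>)
  have c8: "\<forall>j. k+1 \<le> j \<and> j \<le> l-1 \<longrightarrow> lk ?e (Zu j) + lk ?e (Wu j) = lk ?e (Zu (j+1)) + lk ?e (Yu (j+1))"
    by (intro allI impI natI) (use ar in \<open>auto simp add: G\<close>)
  have c9: "\<forall>j. k \<le> j \<and> j + 2 \<le> l \<longrightarrow> lk ?e (Zo j) + lk ?e (Yo j) = lk ?e (Zo (j+1)) + lk ?e (Wo (j+1))"
    by (intro allI impI natI) (use ar in \<open>auto simp add: G\<close>)
  have c10: "lk ?e (Zo (l-1)) + lk ?e (Yo (l-1)) = lk ?e (Zo l)"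
  proof -
    have "G (Zo (l-1)) + G (Yo (l-1)) = G (Zo l)" using ar by (simp add: G)
    then show ?thesis unfolding G_def by linarith
  qed
  have c11: "lk ?e (Z k) = lk ?e (Z (k+1)) + lk ?e (Wu (k+1))"
    by (rule natI3) (use ar ZLk' ZLmid[of "Suc k"] in \<open>simp add: G\<close>)
  have c12: "\<forall>j. k+1 \<le> j \<and> j + 2 \<le> l \<longrightarrow> lk ?e (Z j) + lk ?e (Wo j) = lk ?e (Z (j+1)) + lk ?e (Wu (j+1))"
  proof (intro allI impI natI)
    fix j assume j: "k+1 \<le> j \<and> j + 2 \<le> l"
    show "G (Z j) + G (Wo j) = G (Z (j+1)) + G (Wu (j+1))"
      using j ZLmid[of j] ZLmid[of "Suc j"] ar by (auto simp add: G)
  qed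
  have c13: "lk ?e (Z (l-1)) + lk ?e (Wo (l-1)) = lk ?e (Z l)"
  proof -
    have "G (Z (l-1)) + G (Wo (l-1)) = G (Z l)" using ar ZLl ZLmid[of "l-1"] by (simp add: G)
    then show ?thesis unfolding G_def by linarith
  qed
  show ?thesis
    unfolding sol_def Let_def mem_Collect_eq
    using keys c1 c2 c3 c4 c5 c6 c7 c8 c9 c10 c11 c12 c13 by blast
qed

lemma sol_eq: "sol k l m = L.ee ` L.Hs False"
proof
  show "sol k l m \<subseteq> L.ee ` L.Hs False"
    using S2 by (metis image_eqI subsetI)
  show "L.ee ` L.Hs False \<subseteq> sol k l m"
    using S1 by auto
qed


definition colf :: "nat \<Rightarrow> int" where
  "colf i = int (if i < m then Suc i else if i < a2 then i - m + k + 1 else if i < a3 then i - a2 + k + 1 else i - a3 + 1)"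

lemma colf_tT:
  assumes "1 \<le> c" "c \<le> m" shows "colf (tT c) = int c"
proof -
  have "tT c < m" "Suc (tT c) = c" using assms by (simp_all add: tT_def)
  then show ?thesis by (simp add: colf_def)
qed
lemma colf_tHT:
  assumes "k + 1 \<le> c" "c \<le> l" shows "colf (tHT c) = int c"
proof -
  have "\<not> tHT c < m" "tHT c < a2" "tHT c - m + k + 1 = c" using assms kl lm by (simp_all add: tHT_def a2_def)
  then show ?thesis by (simp add: colf_def)
qed
lemma colf_tHB:
  assumes "k + 1 \<le> c" "c \<le> l" shows "colf (tHB c) = int c"
proof -
  have "\<not> tHB c < m" "\<not> tHB c < a2" "tHB c < a3" "tHB c - a2 + k + 1 = c"
    using assms kl lm by (simp_all add: tHB_def a2_def a3_def)
  then show ?thesis by (simp add: colf_def)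
qed
lemma colf_tB:
  assumes "1 \<le> c" "c \<le> m" shows "colf (tB c) = int c"
proof -
  have "\<not> tB c < m" "\<not> tB c < a2" "\<not> tB c < a3" "tB c - a3 + 1 = c"
    using assms kl lm by (simp_all add: tB_def a2_def a3_def)
  then show ?thesis by (simp add: colf_def)
qed

definition red :: "var \<Rightarrow> bool" where
  "red v \<longleftrightarrow> v = Z 0 \<or> v = Z m \<or> v = Z k \<or> v = Z l \<or> v = Zu k \<or> v = Zo l"

lemma lin_delta:
  assumes v: "v \<in> relvars k l m"
  shows "lin0 colf v = (if \<not> strict v then 1 else if red v then 0 else -1)"
proof (cases v)
  case (Yo j)
  then have "1 \<le> j" "Suc j \<le> m" "j \<le> m" using v by auto
  then show ?thesis using Yo by (simp add: lin0_def colf_tT)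
next
  case (Yu j)
  then have "1 \<le> j" "Suc j \<le> m" "j \<le> m" using v by auto
  then show ?thesis using Yu by (simp add: lin0_def colf_tB)
next
  case (Wo j)
  then have "k + 1 \<le> j" "Suc j \<le> l" "j \<le> l" using v by auto
  then show ?thesis using Wo by (simp add: lin0_def colf_tHT)
next
  case (Wu j)
  then have "k + 1 \<le> j" "Suc j \<le> l" "j \<le> l" using v by auto
  then show ?thesis using Wu by (simp add: lin0_def colf_tHB)
next
  case (Z j)
  then have j: "j \<le> m" using v by simp
  consider "j = 0" | "j \<noteq> 0" "j = m" | "j \<noteq> 0" "j \<noteq> m" "j < k \<or> l < j" | "j = k" | "k < j" "j < l" | "j = l"
    using kl lm by linarith
  then show ?thesis
  proof cases
    case 1 then show ?thesis using Z k0 kl lm by (simp add: lin0_def colf_tT colf_tB red_def)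
  next
    case 2 then show ?thesis using Z k0 kl lm by (simp add: lin0_def colf_tT colf_tB red_def)
  next
    case 3
    have "j \<noteq> k" "j \<noteq> l" using 3 kl by auto
    then show ?thesis using 3 Z j k0 kl lm by (simp add: lin0_def colf_tT colf_tB red_def)
  next
    case 4 then show ?thesis using Z k0 kl lm by (simp add: lin0_def colf_tHT colf_tHB red_def)
  next
    case 5 then show ?thesis using Z k0 kl lm by (simp add: lin0_def colf_tHT colf_tHB red_def)
  next
    case 6 then show ?thesis using Z k0 kl lm by (simp add: lin0_def colf_tHT colf_tHB red_def)
  qed
next
  case (Zo j)
  then have j: "k \<le> j" "j \<le> l" using v by auto
  show ?thesis
  proof (cases "j < l")
    case True then show ?thesis using Zo j k0 kl lm by (simp add: lin0_def colf_tT colf_tHT red_def)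
  next
    case False then have "j = l" using j by simp
    then show ?thesis using Zo j k0 kl lm by (simp add: lin0_def colf_tT colf_tHT red_def)
  qed
next
  case (Zu j)
  then have j: "k \<le> j" "j \<le> l" using v by auto
  show ?thesis
  proof (cases "j = k")
    case True then show ?thesis using Zu j k0 kl lm by (simp add: lin0_def colf_tB colf_tHB red_def)
  next
    case False then show ?thesis using Zu j k0 kl lm by (simp add: lin0_def colf_tB colf_tHB red_def)
  qed
qed

definition num :: "var \<Rightarrow>\<^sub>0 nat" where
  "num = Poly_Mapping.single (Z k) 1 + Poly_Mapping.single (Z l) 1
     + (\<Sum>j\<in>{1..m-1}. Poly_Mapping.single (Yo j) 1 + Poly_Mapping.single (Yu j) 1)
     + (\<Sum>j\<in>{k+1..l-1}. Poly_Mapping.single (Wo j) 1 + Poly_Mapping.single (Wu j) 1)"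

definition den :: "var \<Rightarrow>\<^sub>0 nat" where
  "den = (\<Sum>j\<in>{1..m-1}. Poly_Mapping.single (Z j) 1) + (\<Sum>j\<in>{k+1..l}. Poly_Mapping.single (Zu j) 1)
     + (\<Sum>j\<in>{k..l-1}. Poly_Mapping.single (Zo j) 1)"

lemma mono_eval_single1: "mono_eval x (Poly_Mapping.single v (Suc 0)) = x v"
  by (simp add: mono_eval_def)

lemma me_num: "mono_eval x num = fac_num k l m x"
  by (simp add: num_def fac_num_def mono_eval_add mono_eval_sum mono_eval_single mono_eval_single1)

lemma me_den: "mono_eval x den = fac_den k l m x"
  by (simp add: den_def fac_den_def mono_eval_add mono_eval_sum mono_eval_single mono_eval_single1)

lemma lk_num: "lk num v = (if v \<in> relvars k l m \<and> \<not> strict v then 1 else 0) + (if v = Z k \<or> v = Z l then 1 else 0)"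
  using kl lm
  by (cases v) (auto simp: num_def lookup_add lookup_sum lookup_single when_def)

lemma lk_den: "lk den v = (if v \<in> relvars k l m \<and> strict v \<and> v \<noteq> Z 0 \<and> v \<noteq> Z m \<and> v \<noteq> Zu k \<and> v \<noteq> Zo l then 1 else 0)"
  using k0 kl lm
  by (cases v) (auto simp: den_def lookup_add lookup_sum lookup_single when_def)


definition Pc :: "(nat \<Rightarrow> int) \<Rightarrow> bool" where
  "Pc h \<longleftrightarrow> (\<forall>v\<in>relvars k l m. lin0 h v \<ge> (if strict v \<and> \<not> red v then 1 else 0))"

lemma Pc_weak: "Pc h \<Longrightarrow> w \<in> relvars k l m \<Longrightarrow> lin0 h w \<ge> 0"
  unfolding Pc_def by (metis (full_types) order.trans zero_le_one order_refl)

lemma Pc_strict: "Pc h \<Longrightarrow> w \<in> relvars k l m \<Longrightarrow> strict w \<Longrightarrow> \<not> red w \<Longrightarrow> lin0 h w \<ge> 1"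
  unfolding Pc_def by force

lemma ar: "Suc k \<le> m - Suc 0" "k \<le> m - Suc 0" "l \<le> m - Suc 0" "Suc 0 \<le> m - Suc 0" "\<not> m \<le> m - Suc 0"
    "Suc k < l" "k < l" "k \<le> m" "l \<le> m" "Suc k \<le> l - Suc 0" "k \<le> l - Suc 0" "l - Suc 0 \<le> m"
    "Suc (l - Suc 0) = l" "k < l - Suc 0" "l - Suc 0 < l" "1 \<le> l - Suc 0" "l - Suc 0 \<le> m - Suc 0"
    "Suc (Suc k) \<le> l" "Suc k \<le> m" "k < m" "l < m" "0 < k" "k \<noteq> l" "l \<noteq> m" "k \<noteq> m" "Suc k \<noteq> l"
    "Suc k \<noteq> m" "l - Suc 0 \<noteq> m" "l - Suc 0 \<noteq> k" "Suc (Suc k) \<le> m" "Suc k \<le> l" "l \<noteq> 0" "m \<noteq> 0"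
  using k0 kl lm by auto

lemma red_deriv:
  assumes P: "Pc h" and r: "red v" and v: "v \<in> relvars k l m"
  shows "lin0 h v \<ge> 1"
proof -
  have rv: "v = Z 0 \<or> v = Z m \<or> v = Z k \<or> v = Z l \<or> v = Zu k \<or> v = Zo l" using r by (simp add: red_def)
  have f1: "Suc k \<le> m" "Suc k \<noteq> m" "Suc k \<noteq> l" "Suc k < l" "Suc k \<le> l - Suc 0" "Suc k \<le> m - Suc 0" "k \<le> m - Suc 0"
    "k < l" "k \<noteq> m" "k \<noteq> l" "1 \<le> k" "Suc k \<le> l"
    using k0 kl lm by auto
  have f2: "l - 1 \<le> m" "l - 1 \<noteq> m" "l - 1 \<noteq> k" "l - 1 \<noteq> l" "k < l - 1" "l - 1 < l" "1 \<le> l - 1" "l - 1 \<le> m - 1"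
    "k \<le> l - 1" "Suc (l - 1) = l" "l - 1 \<noteq> 0" "k + 1 \<le> l - 1" "l \<le> m - 1" "l \<noteq> m" "1 \<le> l" "l \<le> m" "l \<noteq> k"
    using k0 kl lm by auto
  have Zk1: "lin0 h (Z (Suc k)) \<ge> 1" by (rule Pc_strict[OF P]) (use f1 in \<open>simp_all add: red_def\<close>)
  have Zk1': "lo (Z (Suc k)) = tHB (Suc (Suc k))" "hi (Z (Suc k)) = tHT (Suc k)"
    using ZLmid[OF lessI f1(4)] by simp_all
  have Wuk1: "lin0 h (Wu (Suc k)) \<ge> 0" by (rule Pc_weak[OF P]) (use f1 in simp)
  have Zuk1: "lin0 h (Zu (Suc k)) \<ge> 1" by (rule Pc_strict[OF P]) (use f1 in \<open>simp_all add: red_def\<close>)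
  have Yuk1: "lin0 h (Yu (Suc k)) \<ge> 0" by (rule Pc_weak[OF P]) (use f1 in simp)
  have Yuk: "lin0 h (Yu k) \<ge> 0" by (rule Pc_weak[OF P]) (use f1 in simp)
  have Zok: "lin0 h (Zo k) \<ge> 1" by (rule Pc_strict[OF P]) (use f1 in \<open>simp_all add: red_def\<close>)
  have Zol1: "lin0 h (Zo (l - 1)) \<ge> 1" by (rule Pc_strict[OF P]) (use f2 in \<open>simp_all add: red_def\<close>)
  have Yol1: "lin0 h (Yo (l - 1)) \<ge> 0" by (rule Pc_weak[OF P]) (use f2 in simp)
  have Wol1: "lin0 h (Wo (l - 1)) \<ge> 0" by (rule Pc_weak[OF P]) (use f2 in simp)
  have Zl1: "lin0 h (Z (l - 1)) \<ge> 1" by (rule Pc_strict[OF P]) (use f2 in \<open>simp_all add: red_def\<close>)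
  have Zl1': "lo (Z (l-1)) = tHB l" "hi (Z (l-1)) = tHT (l-1)"
    using ZLmid[OF f2(5,6)] f2(10) by simp_all
  have Zul: "lin0 h (Zu l) \<ge> 1" by (rule Pc_strict[OF P]) (use f2 in \<open>simp_all add: red_def\<close>)
  have Yol: "lin0 h (Yo l) \<ge> 0" by (rule Pc_weak[OF P]) (use f2 in simp)
  consider "v = Z 0" | "v = Z m" | "v = Z k" | "v = Z l" | "v = Zu k" | "v = Zo l" using rv by blast
  then show ?thesis
  proof cases
    case 1
    show ?thesis
    proof (cases "1 < k")
      case True
      have g: "1 \<le> m" "1 \<noteq> m" "1 \<noteq> k" "1 \<noteq> l" "1 < m" "1 \<le> m - 1" using True kl lm by auto
      have Z1: "lin0 h (Z 1) \<ge> 1" by (rule Pc_strict[OF P]) (use g in \<open>simp_all add: red_def\<close>)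
      have Z1': "lo (Z 1) = tB 2" "hi (Z 1) = tT 1"
        using ZLout[OF _ g(5)] True by (simp_all add: numeral_2_eq_2)
      have Yu1: "lin0 h (Yu 1) \<ge> 0" by (rule Pc_weak[OF P]) (use g in simp)
      have "lin0 h (Z 0) = lin0 h (Z 1) + lin0 h (Yu 1)" using Z1' by (simp add: lin0_def numeral_2_eq_2)
      then show ?thesis using 1 Z1 Yu1 by simp
    next
      case False
      then have A: "tT k = tT 1" "tB k = tB 1" using k0 by (simp_all add: tT_def tB_def)
      have "lin0 h (Z 0) = lin0 h (Zo k) + lin0 h (Z (Suc k)) + lin0 h (Wu (Suc k)) + lin0 h (Zu (Suc k))
          + lin0 h (Yu (Suc k)) + lin0 h (Yu k)"
        using A Zk1' f1 by (simp add: lin0_def)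
      then show ?thesis using 1 Zk1 Wuk1 Zuk1 Yuk1 Yuk Zok by simp
    qed
  next
    case 2
    show ?thesis
    proof (cases "l < m - 1")
      case True
      have g: "m - 1 \<le> m" "m - 1 \<noteq> m" "m - 1 \<noteq> k" "m - 1 \<noteq> l" "m - 1 < m" "1 \<le> m - 1" "m - 1 \<noteq> 0"
        "l < m - 1" "Suc (m - 1) = m" using True kl lm by auto
      have Zm1: "lin0 h (Z (m-1)) \<ge> 1" by (rule Pc_strict[OF P]) (use g in \<open>simp_all add: red_def\<close>)
      have Zm1': "lo (Z (m-1)) = tB m" "hi (Z (m-1)) = tT (m-1)"
        using ZLout[OF g(6) g(5) disjI2[OF g(8)]] g(9) by simp_all
      have Yom1: "lin0 h (Yo (m-1)) \<ge> 0" by (rule Pc_weak[OF P]) (use g in simp)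
      have "lin0 h (Z m) = lin0 h (Z (m-1)) + lin0 h (Yo (m-1))" unfolding lin0_def Zm1' ZLm using g(9) by simp
      then show ?thesis using 2 Zm1 Yom1 by simp
    next
      case False
      then have A: "tT m = tT (Suc l)" "tB m = tB (Suc l)" using lm by (simp_all add: tT_def tB_def)
      have B: "lo (Zo (l-1)) = tHT l" "hi (Zu l) = tHB l" "lo (Zu l) = tB (Suc l)"
        using ZoL[OF f2(6)] f2(10) ZuL[OF f2(17)] by simp_all
      have "lin0 h (Z m) = lin0 h (Yo l) + lin0 h (Yo (l-1)) + lin0 h (Zo (l-1)) + lin0 h (Wo (l-1))
          + lin0 h (Z (l-1)) + lin0 h (Zu l)"
        unfolding lin0_def Zl1' ZLm B using A f2(10) by simp
      then show ?thesis using 2 Yol Yol1 Zol1 Wol1 Zl1 Zul by simp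
    qed
  next
    case 3
    have "lin0 h (Z k) = lin0 h (Z (Suc k)) + lin0 h (Wu (Suc k))" unfolding lin0_def Zk1' ZLk' by simp
    then show ?thesis using 3 Zk1 Wuk1 by simp
  next
    case 4
    have "lin0 h (Z l) = lin0 h (Z (l-1)) + lin0 h (Wo (l-1))" unfolding lin0_def Zl1' ZLl using f2(10) by simp
    then show ?thesis using 4 Zl1 Wol1 by simp
  next
    case 5
    have "lin0 h (Zu k) = lin0 h (Zu (Suc k)) + lin0 h (Yu (Suc k))" by (simp add: lin0_def)
    then show ?thesis using 5 Zuk1 Yuk1 by simp
  next
    case 6
    have "lin0 h (Zo l) = lin0 h (Zo (l-1)) + lin0 h (Yo (l-1))" using f2 by (simp add: lin0_def)
    then show ?thesis using 6 Zol1 Yol1 by simp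
  qed
qed


lemma HsF_P: "h \<in> L.Hs False \<longleftrightarrow> Pc h"
proof
  assume h: "h \<in> L.Hs False"
  show "Pc h" unfolding Pc_def
  proof
    fix v assume v: "v \<in> relvars k l m"
    have "lin0 h v \<ge> (if strict v then 1 else 0)" using h v by (simp add: L.Hs_def Llin thrF')
    then show "lin0 h v \<ge> (if strict v \<and> \<not> red v then 1 else 0)" by (auto split: if_splits)
  qed
next
  assume P: "Pc h"
  show "h \<in> L.Hs False" unfolding L.Hs_def
  proof
    show "\<forall>v\<in>relvars k l m. L.thr False v \<le> L.lin h v"
    proof
      fix v assume v: "v \<in> relvars k l m"
      have "lin0 h v \<ge> (if strict v then 1 else 0)"
      proof (cases "strict v \<and> red v")
        case True then show ?thesis using red_deriv[OF P _ v] by simp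
      next
        case False then show ?thesis using P v unfolding Pc_def by (auto split: if_splits)
      qed
      then show "L.thr False v \<le> L.lin h v" using v by (simp add: Llin thrF')
    qed
  qed
qed

lemma lin0_add: "lin0 (\<lambda>i. h i + g i) v = lin0 h v + lin0 g v"
  by (simp add: lin0_def)

lemma HsT_P: "(\<lambda>i. h i + colf i) \<in> L.Hs True \<longleftrightarrow> Pc h"
proof -
  have "(L.thr True v \<le> L.lin (\<lambda>i. h i + colf i) v) \<longleftrightarrow> (lin0 h v \<ge> (if strict v \<and> \<not> red v then 1 else 0))"
    if v: "v \<in> relvars k l m" for v
    using v by (auto simp: Llin lin0_add lin_delta thrT')
  then show ?thesis by (simp add: L.Hs_def Pc_def)
qed

lemma shift_ee:
  assumes h: "h \<in> L.Hs False"
  shows "num + L.ee h = den + L.ee (\<lambda>i. h i + colf i)"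
proof (rule poly_mapping_eqI)
  fix v
  have P: "Pc h" using h HsF_P by simp
  have h': "(\<lambda>i. h i + colf i) \<in> L.Hs True" using P HsT_P by simp
  show "lk (num + L.ee h) v = lk (den + L.ee (\<lambda>i. h i + colf i)) v"
  proof (cases "v \<in> relvars k l m")
    case True
    have n1: "L.lin h v \<ge> 0" using L.Hs_nonneg[OF h] True by simp
    have n2: "L.lin (\<lambda>i. h i + colf i) v \<ge> 0" using L.Hs_nonneg[OF h'] True by simp
    have key: "int (lk num v) + lin0 h v = int (lk den v) + (lin0 h v + lin0 colf v)"
      using True k0 kl lm by (auto simp: lk_num lk_den lin_delta red_def strict_def split: var.splits)
    have "int (lk (num + L.ee h) v) = int (lk (den + L.ee (\<lambda>i. h i + colf i)) v)"
      using n1 n2 key True by (simp add: lookup_add L.lookup_ee Llin lin0_add)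
    then show ?thesis by simp
  next
    case False
    have "lk num v = 0" "lk den v = 0" using False k0 kl lm by (auto simp: lk_num lk_den)
    then show ?thesis using False by (simp add: lookup_add L.lookup_ee)
  qed
qed

lemma T_eq: "(\<lambda>a. num + a) ` L.ee ` L.Hs False = (\<lambda>a. den + a) ` L.ee ` L.Hs True"
proof
  show "(\<lambda>a. num + a) ` L.ee ` L.Hs False \<subseteq> (\<lambda>a. den + a) ` L.ee ` L.Hs True"
  proof
    fix a assume "a \<in> (\<lambda>a. num + a) ` L.ee ` L.Hs False"
    then obtain h where h: "h \<in> L.Hs False" "a = num + L.ee h" by auto
    have "(\<lambda>i. h i + colf i) \<in> L.Hs True" using h HsF_P HsT_P by simp
    then show "a \<in> (\<lambda>a. den + a) ` L.ee ` L.Hs True" using shift_ee[OF h(1)] h(2) by auto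
  qed
next
  show "(\<lambda>a. den + a) ` L.ee ` L.Hs True \<subseteq> (\<lambda>a. num + a) ` L.ee ` L.Hs False"
  proof
    fix a assume "a \<in> (\<lambda>a. den + a) ` L.ee ` L.Hs True"
    then obtain h' where h': "h' \<in> L.Hs True" "a = den + L.ee h'" by auto
    define h where "h i = h' i - colf i" for i
    have eq: "(\<lambda>i. h i + colf i) = h'" by (simp add: h_def fun_eq_iff)
    have hF: "h \<in> L.Hs False" using h' HsT_P[of h] HsF_P eq by simp
    have "num + L.ee h = a" using shift_ee[OF hF] eq h'(2) by simp
    then show "a \<in> (\<lambda>a. num + a) ` L.ee ` L.Hs False" using hF by auto
  qed
qed

lemma gf_cv: "gf_eq_ratfun S P Q \<longleftrightarrow> Q \<noteq> 0 \<and> lk P = cv Q (ind S)"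
proof -
  have "(if \<exists>b\<in>S. a + b = e then lk Q a else 0) = lk Q a * sh a (ind S) e" for a e
  proof (cases "\<exists>b\<in>S. a + b = e")
    case True
    then obtain b where "b \<in> S" "a + b = e" by auto
    then show ?thesis by (auto simp: sh_def ind_def lepm_add)
  next
    case False
    then have "\<not> (lepm a e \<and> e - a \<in> S)" by (metis lepm_def)
    then show ?thesis using False by (auto simp: sh_def ind_def)
  qed
  then show ?thesis by (simp add: gf_eq_ratfun_def cv_def fun_eq_iff)
qed

theorem main:
  "\<exists>P Q. gf_eq_ratfun (sol k l m) P Q \<and>
    (\<forall>x :: var \<Rightarrow> real. (\<forall>v. x v \<noteq> 0) \<longrightarrow>
       peval P (recip x) * peval Q x * fac_den k l m x
         = - fac_num k l m x * peval P x * peval Q (recip x))"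
proof (intro exI conjI allI impI)
  have "cv L.Qall (ind ((\<lambda>a. 0 + a) ` L.ee ` L.Hs False)) = lk (L.Pol False 0)" by (rule L.GM)
  then have "cv L.Qall (ind (sol k l m)) = lk (L.Pol False 0)" by (simp add: sol_eq)
  then show "gf_eq_ratfun (sol k l m) (L.Pol False 0) L.Qall"
    using L.Qall_nz by (simp add: gf_cv)
next
  fix x :: "var \<Rightarrow> real"
  assume x: "\<forall>v. x v \<noteq> 0"
  have odd: "odd (nn - 1)" using lm by (simp add: nn_def)
  show "peval (L.Pol False 0) (recip x) * peval L.Qall x * fac_den k l m x
      = - fac_num k l m x * peval (L.Pol False 0) x * peval L.Qall (recip x)"
    using L.GR[OF odd T_eq x] by (simp add: me_num me_den)
qed

end

theorem proposition3:
  fixes k l m :: nat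
  assumes "0 < k" and "k < l" and "l < m" and "l - k > 1"
  shows "\<exists>P Q. gf_eq_ratfun (sol k l m) P Q \<and>
    (\<forall>x :: var \<Rightarrow> real. (\<forall>v. x v \<noteq> 0) \<longrightarrow>
       peval P (recip x) * peval Q x * fac_den k l m x
         = - fac_num k l m x * peval P x * peval Q (recip x))"
  proof -
  interpret fig k l m
    by unfold_locales (use assms in auto)
  show ?thesis by (rule main)
qed

end
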